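(* Let $W$ be a bounded real function on $\mathbb N^d$, viewed as a multiplication operator on $\ell^2(\mathbb N^d)$, satisfying (H0) $W(n)\to0$ as $|n|\to\infty$, and (H1) there are $C,\varepsilon>0$ with $|W(n+e_j)-W(n)|\le C\Lambda(n)^{-\varepsilon}\langle n_j\rangle^{-1}$ for all $j$, $n$. Then $W\in\mathcal C^1(A_{\mathbb N^d})$ and $[W,\mathrm iA_{\mathbb N^d}]\in\mathcal C^{0,1}(A_{\mathbb N^d})$. In particular $W\in\mathcal C^{1,1}(A_{\mathbb N^d})$.
   Context: $\mathbb N=\{0,1,2,\dots\}$. $\langle x\rangle=(1+x^2)^{1/2}$, $\Lambda(n)=\sum_j\langle n_j\rangle$. $A_{\mathbb N^d}=\sum_jA_{j,+}$, $A_{j,+}=-\frac{\mathrm i\,\mathrm{sign}(r_j)}2(U_{j,+}(Q_j+\frac12)-(Q_j+\frac12)U_{j,+}^* )$ for fixed $\vec r$ with nonzero components, $U_{j,+}$ unilateral shift ($(U_{j,+}f)(n)=f(n-e_j)$ if $n_j\ge1$, $0$ otherwise), $(Q_jf)(n)=n_jf(n)$, closure from finitely supported functions; $[W,\mathrm iA]$ is the bounded extension of the form commutator. For bounded $T$: $T\in\mathcal C^1(A)$ iff $s\mapsto e^{\mathrm isA}Te^{-\mathrm isA}$ is strongly $C^1$; $T\in\mathcal C^{0,1}(A)$ iff $\int_0^1\|e^{\mathrm isA}Te^{-\mathrm isA}-T\|ds/s<\infty$; $T\in\mathcal C^{1,1}(A)$ iff $\int_0^1\|e^{\mathrm isA}Te^{-\mathrm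 isA}+e^{-\mathrm isA}Te^{\mathrm isA}-2T\|ds/s^2<\infty$. *)

theory Defs
  imports "HOL-Analysis.Analysis"
begin

text \<open>Sequences on N^d: index type 'd (finite, d = CARD('d)), points n :: 'd => nat.
 Operators are functions on such sequences; only their action on l^2 matters.\<close>

type_synonym 'd seq = "('d \<Rightarrow> nat) \<Rightarrow> complex"

definition l2 :: "('a \<Rightarrow> complex) set" where
  "l2 = {f. (\<lambda>n. (cmod (f n))^2) summable_on UNIV}"

definition l2norm :: "('a \<Rightarrow> complex) \<Rightarrow> real" where
  "l2norm f = sqrt (infsum (\<lambda>n. (cmod (f n))^2) UNIV)"

definition l2inner :: "('a \<Rightarrow> complex) \<Rightarrow> ('a \<Rightarrow> complex) \<Rightarrow> complex" where
  "l2inner f g = infsum (\<lambda>n. cnj (f n) * g n) UNIV"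

definition l2_tendsto :: "('b \<Rightarrow> 'a \<Rightarrow> complex) \<Rightarrow> ('a \<Rightarrow> complex) \<Rightarrow> 'b filter \<Rightarrow> bool" where
  "l2_tendsto F g Fl \<longleftrightarrow> ((\<lambda>s. l2norm (\<lambda>n. F s n - g n)) \<longlongrightarrow> 0) Fl"

definition bounded_op :: "(('a \<Rightarrow> complex) \<Rightarrow> ('a \<Rightarrow> complex)) \<Rightarrow> bool" where
  "bounded_op T \<longleftrightarrow> (\<forall>f\<in>l2. T f \<in> l2)
     \<and> (\<forall>f\<in>l2. \<forall>g\<in>l2. \<forall>a b. T (\<lambda>n. a * f n + b * g n) = (\<lambda>n. a * T f n + b * T g n))
     \<and> (\<exists>M. \<forall>f\<in>l2. l2norm (T f) \<le> M * l2norm f)"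

definition op_norm :: "(('a \<Rightarrow> complex) \<Rightarrow> ('a \<Rightarrow> complex)) \<Rightarrow> real" where
  "op_norm T = (SUP f\<in>{f\<in>l2. l2norm f \<le> 1}. l2norm (T f))"

definition mult_op :: "('a \<Rightarrow> real) \<Rightarrow> ('a \<Rightarrow> complex) \<Rightarrow> ('a \<Rightarrow> complex)" where
  "mult_op W f = (\<lambda>n. complex_of_real (W n) * f n)"

text \<open>A_{j,+} = -(i sign(r_j)/2) (U_{j,+}(Q_j+1/2) - (Q_j+1/2) U_{j,+}^*), written out on functions.\<close>
definition A_plus :: "('d \<Rightarrow> real) \<Rightarrow> 'd \<Rightarrow> 'd seq \<Rightarrow> 'd seq" where
  "A_plus r j f = (\<lambda>n. - (\<i> * complex_of_real (sgn (r j)) / 2) *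
      ((if 1 \<le> n j then complex_of_real (real (n j) - 1/2) * f (n(j := n j - 1)) else 0)
       - complex_of_real (real (n j) + 1/2) * f (n(j := n j + 1))))"

definition A0 :: "('d::finite \<Rightarrow> real) \<Rightarrow> 'd seq \<Rightarrow> 'd seq" where
  "A0 r f = (\<lambda>n. \<Sum>j\<in>UNIV. A_plus r j f n)"

definition fin_supp :: "('a \<Rightarrow> complex) \<Rightarrow> bool" where
  "fin_supp f \<longleftrightarrow> finite {n. f n \<noteq> 0}"

text \<open>Graph of the closure A_{N^d} of A0 defined on finitely supported functions:
  A_graph r f g  means  f \<in> D(A) and A f = g.\<close>
definition A_graph :: "('d::finite \<Rightarrow> real) \<Rightarrow> 'd seq \<Rightarrow> 'd seq \<Rightarrow> bool" where
  "A_graph r f g \<longleftrightarrow> f \<in> l2 \<and> g \<in> l2 \<and>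
     (\<exists>fk. (\<forall>k. fin_supp (fk k)) \<and> l2_tendsto fk f sequentially
           \<and> l2_tendsto (\<lambda>k. A0 r (fk k)) g sequentially)"

text \<open>U is the strongly continuous unitary group e^{isA} generated by the self-adjoint
  operator with graph G (Stone's theorem): U s is unitary on l^2, U is a strongly continuous
  one-parameter group, and its generator is iA, i.e. (U s f - f)/s converges in l^2 as s->0
  exactly for f in D(A), with limit i A f.\<close>
definition unitary_group_gen :: "(real \<Rightarrow> 'd seq \<Rightarrow> 'd seq) \<Rightarrow> ('d seq \<Rightarrow> 'd seq \<Rightarrow> bool) \<Rightarrow> bool" where
  "unitary_group_gen U G \<longleftrightarrow>
     (\<forall>s. bounded_op (U s) \<and> U s ` l2 = l2 \<and> (\<forall>f\<in>l2. l2norm (U s f) = l2norm f))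
   \<and> (\<forall>f\<in>l2. U 0 f = f)
   \<and> (\<forall>s t. \<forall>f\<in>l2. U (s + t) f = U s (U t f))
   \<and> (\<forall>f\<in>l2. \<forall>s0. l2_tendsto (\<lambda>s. U s f) (U s0 f) (at s0))
   \<and> (\<forall>f\<in>l2. \<forall>g. (g \<in> l2 \<and> l2_tendsto (\<lambda>s. \<lambda>n. (U s f n - f n) / complex_of_real s) g (at 0))
                  \<longleftrightarrow> (\<exists>h. G f h \<and> g = (\<lambda>n. \<i> * h n)))"

definition strongly_C1 :: "(real \<Rightarrow> ('a \<Rightarrow> complex)) \<Rightarrow> bool" where
  "strongly_C1 F \<longleftrightarrow> (\<exists>D. (\<forall>s. D s \<in> l2 \<and>
        l2_tendsto (\<lambda>h. \<lambda>n. (F (s + h) n - F s n) / complex_of_real h) (D s) (at 0))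
      \<and> (\<forall>s. l2_tendsto D (D s) (at s)))"

definition C1_class :: "(real \<Rightarrow> 'd seq \<Rightarrow> 'd seq) \<Rightarrow> ('d seq \<Rightarrow> 'd seq) \<Rightarrow> bool" where
  "C1_class U T \<longleftrightarrow> bounded_op T \<and> (\<forall>f\<in>l2. strongly_C1 (\<lambda>s. U s (T (U (- s) f))))"

definition C01_class :: "(real \<Rightarrow> 'd seq \<Rightarrow> 'd seq) \<Rightarrow> ('d seq \<Rightarrow> 'd seq) \<Rightarrow> bool" where
  "C01_class U T \<longleftrightarrow> bounded_op T \<and>
     (\<integral>\<^sup>+ s \<in> {0<..1}. ennreal (op_norm (\<lambda>f. \<lambda>n. U s (T (U (- s) f)) n - T f n) / s) \<partial>lborel) < \<infinity>"

definition C11_class :: "(real \<Rightarrow> 'd seq \<Rightarrow> 'd seq) \<Rightarrow> ('d seq \<Rightarrow> 'd seq) \<Rightarrow> bool" where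
  "C11_class U T \<longleftrightarrow> bounded_op T \<and>
     (\<integral>\<^sup>+ s \<in> {0<..1}. ennreal (op_norm (\<lambda>f. \<lambda>n. U s (T (U (- s) f)) n + U (- s) (T (U s f)) n - 2 * T f n) / s^2) \<partial>lborel) < \<infinity>"

definition jbr :: "real \<Rightarrow> real" where "jbr x = sqrt (1 + x^2)"

definition Lambda :: "('d::finite \<Rightarrow> nat) \<Rightarrow> real" where
  "Lambda n = (\<Sum>j\<in>UNIV. jbr (real (n j)))"

definition eucl_abs :: "('d::finite \<Rightarrow> nat) \<Rightarrow> real" where
  "eucl_abs n = sqrt (\<Sum>j\<in>UNIV. (real (n j))^2)"

end

theory Submission
  imports Defs
begin

lemma summable_real_le:
  fixes f g :: "'a \<Rightarrow> real"
  assumes "g summable_on A" "\<And>x. x\<in>A \<Longrightarrow> 0 \<le> f x" "\<And>x. x\<in>A \<Longrightarrow> f x \<le> g x"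
  shows "f summable_on A"
proof -
  have "Infinite_Sum.abs_summable_on g A" using assms(1) summable_on_iff_abs_summable_on_real by blast
  then have "Infinite_Sum.abs_summable_on f A"
    by (rule Infinite_Sum.abs_summable_on_comparison_test[of g A f]) (use assms in force)
  then show ?thesis using summable_on_iff_abs_summable_on_real by blast
qed

lemma l2_0[simp]: "(\<lambda>_. 0) \<in> l2" by (simp add: l2_def)

lemma sq_add_le: "(cmod (a + b))^2 \<le> 2 * (cmod a)^2 + 2 * (cmod b)^2"
proof -
  have "cmod (a+b) \<le> cmod a + cmod b" by (rule norm_triangle_ineq)
  then have "(cmod (a+b))^2 \<le> (cmod a + cmod b)^2" by (simp add: power_mono)
  also have "\<dots> \<le> 2 * (cmod a)^2 + 2 * (cmod b)^2"
  proof -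
    have "0 \<le> (cmod a - cmod b)^2" by simp
    then show ?thesis by (simp add: power2_diff power2_sum)
  qed
  finally show ?thesis .
qed

lemma l2_add: "f \<in> l2 \<Longrightarrow> g \<in> l2 \<Longrightarrow> (\<lambda>n. f n + g n) \<in> l2"
  unfolding l2_def mem_Collect_eq
  apply (rule summable_real_le[where g="\<lambda>n. 2 * (cmod (f n))^2 + 2 * (cmod (g n))^2"])
  by (auto intro!: summable_on_add summable_on_cmult_right simp: sq_add_le)

lemma l2_mult_bdd: "f \<in> l2 \<Longrightarrow> (\<And>n. cmod (c n) \<le> M) \<Longrightarrow> (\<lambda>n. c n * f n) \<in> l2"
  unfolding l2_def mem_Collect_eq
  apply (rule summable_real_le[where g="\<lambda>n. M^2 * (cmod (f n))^2"])
  apply (auto intro!: summable_on_cmult_right simp: norm_mult power_mult_distrib)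
  apply (rule mult_right_mono)
   apply (rule power_mono; auto)
  by simp

lemma l2_scale: "f \<in> l2 \<Longrightarrow> (\<lambda>n. c * f n) \<in> l2"
  using l2_mult_bdd[of f "\<lambda>_. c" "cmod c"] by simp

lemma l2_uminus: "f \<in> l2 \<Longrightarrow> (\<lambda>n. - f n) \<in> l2"
  using l2_scale[of f "-1"] by simp

lemma l2_diff: "f \<in> l2 \<Longrightarrow> g \<in> l2 \<Longrightarrow> (\<lambda>n. f n - g n) \<in> l2"
  using l2_add[of f "\<lambda>n. - g n"] l2_uminus[of g] by simp

lemma l2_prod_abs_summable:
  assumes "f \<in> l2" "g \<in> l2"
  shows "Infinite_Sum.abs_summable_on (\<lambda>n. cnj (f n) * g n) UNIV"
proof -
  have "(\<lambda>n. (cmod (f n))^2 + (cmod (g n))^2) summable_on UNIV"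
    using assms by (auto simp: l2_def intro!: summable_on_add)
  then show ?thesis
    apply (rule summable_real_le)
    apply simp
    apply (simp add: norm_mult)
    subgoal for n
    proof -
      have "0 \<le> (cmod (f n) - cmod (g n))^2" by simp
      then have A: "2 * cmod (f n) * cmod (g n) \<le> (cmod (f n))^2 + (cmod (g n))^2" by (simp add: power2_diff)
      have B: "0 \<le> cmod (f n) * cmod (g n)" by simp
      from A B show ?thesis by linarith
    qed
    done
qed

lemma l2_prod_summable:
  assumes "f \<in> l2" "g \<in> l2"
  shows "(\<lambda>n. cnj (f n) * g n) summable_on UNIV"
  using abs_summable_summable[OF l2_prod_abs_summable[OF assms]] .

lemma cnj_mult_self: "cnj z * z = complex_of_real ((cmod z)^2)"
  using complex_norm_square mult.commute by (metis complex_mult_cnj)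

lemma l2inner_self: "f \<in> l2 \<Longrightarrow> l2inner f f = complex_of_real (infsum (\<lambda>n. (cmod (f n))^2) UNIV)"
proof -
  assume "f \<in> l2"
  then have s: "(\<lambda>n. cnj (f n) * f n) summable_on UNIV" using l2_prod_summable by blast
  have "l2inner f f = infsum (\<lambda>n. complex_of_real ((cmod (f n))^2)) UNIV"
    unfolding l2inner_def by (simp add: cnj_mult_self)
  also have "\<dots> = complex_of_real (infsum (\<lambda>n. (cmod (f n))^2) UNIV)"
  proof (rule infsumI)
    have "(\<lambda>n. (cmod (f n))^2) summable_on UNIV" using \<open>f \<in> l2\<close> by (simp add: l2_def)
    from has_sum_bounded_linear[OF bounded_linear_of_real has_sum_infsum[OF this]]
    show "((\<lambda>n. complex_of_real ((cmod (f n))^2)) has_sum complex_of_real (infsum (\<lambda>n. (cmod (f n))^2) UNIV)) UNIV" .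
  qed
  finally show ?thesis .
qed

lemma l2inner_scale_left:
  assumes "f \<in> l2" "g \<in> l2"
  shows "l2inner (\<lambda>n. c * f n) g = cnj c * l2inner f g"
proof -
  have e: "(\<lambda>n. cnj (c * f n) * g n) = (\<lambda>n. cnj c * (cnj (f n) * g n))"
    by (simp add: algebra_simps)
  show ?thesis unfolding l2inner_def e
    by (rule infsum_cmult_right; rule l2_prod_summable) (use assms in auto)
qed

lemma l2inner_scale_right:
  assumes "f \<in> l2" "g \<in> l2"
  shows "l2inner f (\<lambda>n. c * g n) = c * l2inner f g"
proof -
  have e: "(\<lambda>n. cnj (f n) * (c * g n)) = (\<lambda>n. c * (cnj (f n) * g n))"
    by (simp add: algebra_simps)
  show ?thesis unfolding l2inner_def e
    by (rule infsum_cmult_right; rule l2_prod_summable) (use assms in auto)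
qed

lemma l2inner_add_left:
  assumes "f \<in> l2" "g \<in> l2" "h \<in> l2"
  shows "l2inner (\<lambda>n. f n + g n) h = l2inner f h + l2inner g h"
proof -
  have e: "(\<lambda>n. cnj (f n + g n) * h n) = (\<lambda>n. cnj (f n) * h n + cnj (g n) * h n)"
    by (simp add: algebra_simps)
  show ?thesis unfolding l2inner_def e
    by (rule infsum_add; rule l2_prod_summable) (use assms in auto)
qed

lemma l2inner_add_right:
  assumes "f \<in> l2" "g \<in> l2" "h \<in> l2"
  shows "l2inner h (\<lambda>n. f n + g n) = l2inner h f + l2inner h g"
proof -
  have e: "(\<lambda>n. cnj (h n) * (f n + g n)) = (\<lambda>n. cnj (h n) * f n + cnj (h n) * g n)"
    by (simp add: algebra_simps)
  show ?thesis unfolding l2inner_def e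
    by (rule infsum_add; rule l2_prod_summable) (use assms in auto)
qed

lemma l2inner_cnj: "l2inner g f = cnj (l2inner f g)"
  unfolding l2inner_def infsum_cnj[symmetric] by (simp add: mult.commute)

typedef 'a lv = "l2 :: ('a \<Rightarrow> complex) set" morphisms vf Vec
  by (rule exI[of _ "\<lambda>_. 0"]) simp

setup_lifting type_definition_lv

instantiation lv :: (type) real_vector
begin
lift_definition zero_lv :: "'a lv" is "\<lambda>_. 0" by simp
lift_definition plus_lv :: "'a lv \<Rightarrow> 'a lv \<Rightarrow> 'a lv" is "\<lambda>f g n. f n + g n" by (rule l2_add)
lift_definition uminus_lv :: "'a lv \<Rightarrow> 'a lv" is "\<lambda>f n. - f n" by (rule l2_uminus)
lift_definition minus_lv :: "'a lv \<Rightarrow> 'a lv \<Rightarrow> 'a lv" is "\<lambda>f g n. f n - g n" by (rule l2_diff)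
lift_definition scaleR_lv :: "real \<Rightarrow> 'a lv \<Rightarrow> 'a lv" is "\<lambda>r f n. complex_of_real r * f n" by (simp add: l2_scale)
instance
  by standard (transfer; simp add: algebra_simps)+
end

instantiation lv :: (type) real_inner
begin
lift_definition inner_lv :: "'a lv \<Rightarrow> 'a lv \<Rightarrow> real" is "\<lambda>f g. Re (l2inner f g)" .
definition norm_lv :: "'a lv \<Rightarrow> real" where "norm_lv x = sqrt (inner x x)"
definition dist_lv :: "'a lv \<Rightarrow> 'a lv \<Rightarrow> real" where "dist_lv x y = norm (x - y)"
definition sgn_lv :: "'a lv \<Rightarrow> 'a lv" where "sgn_lv x = inverse (norm x) *\<^sub>R x"
definition uniformity_lv :: "('a lv \<times> 'a lv) filter" where
  "uniformity_lv = (INF e\<in>{0<..}. principal {(x, y). dist x y < e})"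
definition open_lv :: "'a lv set \<Rightarrow> bool" where
  "open_lv U = (\<forall>x\<in>U. eventually (\<lambda>(x', y). x' = x \<longrightarrow> y \<in> U) uniformity)"
instance
proof
  fix x y z :: "'a lv" and a b :: real
  show "sgn x = x /\<^sub>R norm x" by (simp add: sgn_lv_def)
  show "dist x y = norm (x - y)" by (simp add: dist_lv_def)
  show "(uniformity :: ('a lv \<times> 'a lv) filter) = (INF e\<in>{0<..}. principal {(x, y). dist x y < e})"
    by (simp add: uniformity_lv_def)
  show "\<And>U :: 'a lv set. open U = (\<forall>x\<in>U. \<forall>\<^sub>F (x', y) in uniformity. x' = x \<longrightarrow> y \<in> U)"
    by (simp add: open_lv_def)
  show "inner x y = inner y x"
  proof transfer
    fix f g :: "'a \<Rightarrow> complex"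
    have "l2inner g f = cnj (l2inner f g)"
      unfolding l2inner_def infsum_cnj[symmetric] by (simp add: mult.commute)
    then show "Re (l2inner f g) = Re (l2inner g f)" by simp
  qed
  show "inner (x + y) z = inner x z + inner y z"
  proof transfer
    fix f g h :: "'a \<Rightarrow> complex" assume "f \<in> l2" "g \<in> l2" "h \<in> l2"
    then have "l2inner (\<lambda>n. f n + g n) h = l2inner f h + l2inner g h"
    proof -
      have e: "(\<lambda>n. cnj (f n + g n) * h n) = (\<lambda>n. cnj (f n) * h n + cnj (g n) * h n)"
        by (simp add: algebra_simps)
      show ?thesis unfolding l2inner_def e
        by (rule infsum_add; rule l2_prod_summable) (use \<open>f \<in> l2\<close> \<open>g \<in> l2\<close> \<open>h \<in> l2\<close> in auto)
    qed
    then show "Re (l2inner (\<lambda>n. f n + g n) h) = Re (l2inner f h) + Re (l2inner g h)" by simp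
  qed
  show "inner (a *\<^sub>R x) y = a * inner x y"
    by transfer (simp add: l2inner_scale_left)
  show "0 \<le> inner x x"
    by transfer (auto simp: l2inner_self intro!: infsum_nonneg)
  show "(inner x x = 0) = (x = 0)"
  proof transfer
    fix f :: "'a \<Rightarrow> complex" assume f: "f \<in> l2"
    show "(Re (l2inner f f) = 0) = (f = (\<lambda>_. 0))"
    proof
      assume "Re (l2inner f f) = 0"
      then have "infsum (\<lambda>n. (cmod (f n))^2) UNIV \<le> 0" using f by (simp add: l2inner_self)
      then have "\<And>n. (cmod (f n))^2 = 0"
      proof -
        fix n
        have "(\<lambda>n. (cmod (f n))^2) summable_on UNIV" using f by (simp add: l2_def)
        from nonneg_infsum_le_0D[OF \<open>infsum (\<lambda>n. (cmod (f n))^2) UNIV \<le> 0\<close> this]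
        show "(cmod (f n))^2 = 0" by simp
      qed
      then show "f = (\<lambda>_. 0)" by auto
    qed (simp add: l2inner_def)
  qed
  show "norm x = sqrt (inner x x)" by (simp add: norm_lv_def)
qed
end

lemma norm_vec_l2norm: "norm x = l2norm (vf x)"
  unfolding norm_lv_def l2norm_def inner_lv.rep_eq using vf[of x]
  by (simp add: l2inner_self)

lemma inner_vec_l2inner: "inner x y = Re (l2inner (vf x) (vf y))"
  by (simp add: inner_lv.rep_eq)

lemma vf_plus: "vf (x + y) = (\<lambda>n. vf x n + vf y n)" by transfer simp
lemma vf_minus: "vf (x - y) = (\<lambda>n. vf x n - vf y n)" by transfer simp
lemma vf_uminus: "vf (- x) = (\<lambda>n. - vf x n)" by transfer simp
lemma vf_zero: "vf 0 = (\<lambda>_. 0)" by transfer simp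
lemma vf_scaleR: "vf (a *\<^sub>R x) = (\<lambda>n. complex_of_real a * vf x n)" by transfer simp

lemma vderiv_from_quotient:
  fixes f :: "real \<Rightarrow> 'v::real_normed_vector"
  assumes "((\<lambda>k. (f (t + k) - f t) /\<^sub>R k) \<longlongrightarrow> v) (at 0)"
  shows "(f has_vector_derivative v) (at t)"
  unfolding has_vector_derivative_def has_derivative_at
proof (intro conjI)
  show "bounded_linear (\<lambda>h. h *\<^sub>R v)" by (rule bounded_linear_scaleR_left)
  have "((\<lambda>k. norm ((f (t + k) - f t) /\<^sub>R k - v)) \<longlongrightarrow> 0) (at 0)"
    using tendsto_norm_zero[OF LIM_zero[OF assms]] by simp
  moreover have "\<forall>\<^sub>F k in at 0. norm ((f (t + k) - f t) /\<^sub>R k - v) = norm (f (t + k) - f t - k *\<^sub>R v) / norm k"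
  proof (rule eventually_mono[OF eventually_neq_at_within[of 0 0 UNIV]])
    fix k :: real assume "k \<noteq> 0"
    have "(1 / k) *\<^sub>R (f (t + k) - f t - k *\<^sub>R v) = (1 / k) *\<^sub>R (f (t + k) - f t) - v"
      using \<open>k \<noteq> 0\<close> by (simp add: scaleR_diff_right)
    also have "(1 / k) *\<^sub>R (f (t + k) - f t) = (f (t + k) - f t) /\<^sub>R k"
      by (simp add: inverse_eq_divide)
    finally have "(f (t + k) - f t) /\<^sub>R k - v = (1 / k) *\<^sub>R (f (t + k) - f t - k *\<^sub>R v)"
      by simp
    then show "norm ((f (t + k) - f t) /\<^sub>R k - v) = norm (f (t + k) - f t - k *\<^sub>R v) / norm k"
      by (simp add: divide_simps)
  qed
  ultimately show "((\<lambda>h. norm (f (t + h) - f t - h *\<^sub>R v) / norm h) \<longlongrightarrow> 0) (at 0)"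
    by (rule Lim_transform_eventually)
qed

lemma mvt_real_any:
  fixes g g' :: "real \<Rightarrow> real"
  assumes "\<And>t. (g has_real_derivative g' t) (at t)"
  shows "\<exists>\<xi>. min a b \<le> \<xi> \<and> \<xi> \<le> max a b \<and> g b - g a = (b - a) * g' \<xi>"
proof -
  have cont: "continuous_on S g" for S
    using assms by (meson DERIV_isCont continuous_at_imp_continuous_on)
  have diff: "g differentiable (at x)" for x using assms real_differentiable_def by blast
  consider "a < b" | "a = b" | "b < a" by linarith
  then show ?thesis
  proof cases
    case 1
    from MVT[OF 1 cont diff] obtain l z where "a < z" "z < b" "DERIV g z :> l" "g b - g a = (b - a) * l"
      by blast
    moreover have "l = g' z" using DERIV_unique[OF \<open>DERIV g z :> l\<close> assms[of z]] .
    ultimately show ?thesis using 1 by (intro exI[of _ z]) auto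
  next
    case 2 then show ?thesis by auto
  next
    case 3
    from MVT[OF 3 cont diff] obtain l z where "b < z" "z < a" "DERIV g z :> l" "g a - g b = (a - b) * l"
      by blast
    moreover have "l = g' z" using DERIV_unique[OF \<open>DERIV g z :> l\<close> assms[of z]] .
    ultimately show ?thesis using 3 by (intro exI[of _ z]) (auto simp: algebra_simps)
  qed
qed

locale abs_setting =
  fixes U :: "real \<Rightarrow> 'v::real_inner \<Rightarrow> 'v" and D :: "'v set" and iA :: "'v \<Rightarrow> 'v"
    and W B :: "'v \<Rightarrow> 'v" and nW nB :: real
  assumes U_lin: "\<And>s. linear (U s)"
    and U_norm: "\<And>s x. norm (U s x) = norm x"
    and U_comp: "\<And>s t x. U s (U t x) = U (s + t) x"
    and U_0: "\<And>x. U 0 x = x"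
    and U_cont: "\<And>x s0. ((\<lambda>s. U s x) \<longlongrightarrow> U s0 x) (at s0)"
    and D_gen: "\<And>x. x \<in> D \<Longrightarrow> ((\<lambda>k. (U k x - x) /\<^sub>R k) \<longlongrightarrow> iA x) (at 0)"
    and D_conv: "\<And>x y. ((\<lambda>k. (U k x - x) /\<^sub>R k) \<longlongrightarrow> y) (at 0) \<Longrightarrow> x \<in> D"
    and D_dense: "\<And>x e. e > 0 \<Longrightarrow> \<exists>d\<in>D. norm (x - d) < e"
    and W_lin: "linear W" and W_bd: "\<And>x. norm (W x) \<le> nW * norm x"
    and W_sym: "\<And>x y. inner (W x) y = inner x (W y)"
    and B_lin: "linear B" and B_bd: "\<And>x. norm (B x) \<le> nB * norm x"
    and form: "\<And>x y. x \<in> D \<Longrightarrow> y \<in> D \<Longrightarrow> inner y (B x) = inner (W y) (iA x) + inner (iA y) (W x)"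
    and nW_nn: "0 \<le> nW" and nB_nn: "0 \<le> nB"
begin

lemma U_bl: "bounded_linear (U s)"
  using U_lin[of s] U_norm by (auto intro!: bounded_linear_intro[where K=1] simp: linear_add linear_scale)

lemma W_bl: "bounded_linear W"
  using W_lin W_bd by (auto intro!: bounded_linear_intro[where K=nW] simp: linear_add linear_scale mult.commute)

lemma B_bl: "bounded_linear B"
  using B_lin B_bd by (auto intro!: bounded_linear_intro[where K=nB] simp: linear_add linear_scale mult.commute)

lemma U_add: "U s (x + y) = U s x + U s y" using U_lin linear_add by blast
lemma U_diff: "U s (x - y) = U s x - U s y" using U_lin linear_diff by blast
lemma U_scale: "U s (c *\<^sub>R x) = c *\<^sub>R U s x" using U_lin linear_scale by blast
lemma U_minus: "U s (- x) = - U s x" using U_lin linear_neg by blast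
lemma U_zero: "U s 0 = 0" using U_lin linear_0 by blast
lemma B_diff: "B (x - y) = B x - B y" using B_lin linear_diff by blast
lemma B_add: "B (x + y) = B x + B y" using B_lin linear_add by blast
lemma W_diff: "W (x - y) = W x - W y" using W_lin linear_diff by blast
lemma W_add: "W (x + y) = W x + W y" using W_lin linear_add by blast

lemma U_inv: "U s (U (- s) x) = x" "U (- s) (U s x) = x"
  by (simp_all add: U_comp U_0)

lemma U_inner: "inner (U s x) (U s y) = inner x y"
proof -
  have "norm (U s (x + y))^2 = norm (x + y)^2" by (simp add: U_norm)
  then have "inner (U s x + U s y) (U s x + U s y) = inner (x + y) (x + y)"
    by (simp add: U_add power2_norm_eq_inner)
  then have "inner (U s x) (U s x) + 2 * inner (U s x) (U s y) + inner (U s y) (U s y)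
      = inner x x + 2 * inner x y + inner y y"
    by (simp add: inner_add inner_commute)
  moreover have "inner (U s x) (U s x) = inner x x" "inner (U s y) (U s y) = inner y y"
    using U_norm by (metis power2_norm_eq_inner)+
  ultimately show ?thesis by simp
qed

lemma U_adj: "inner (U s x) y = inner x (U (- s) y)"
  by (metis U_inner U_inv(1))

lemma U_tendsto_comp:
  assumes "(w \<longlongrightarrow> w0) (at s)"
  shows "((\<lambda>t. U t (w t)) \<longlongrightarrow> U s w0) (at s)"
proof -
  have 1: "((\<lambda>t. U t (w t - w0)) \<longlongrightarrow> 0) (at s)"
  proof (rule tendsto_norm_zero_cancel)
    have "((\<lambda>t. norm (w t - w0)) \<longlongrightarrow> 0) (at s)"
      using tendsto_norm_zero[OF LIM_zero[OF assms]] .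
    then show "((\<lambda>t. norm (U t (w t - w0))) \<longlongrightarrow> 0) (at s)" by (simp add: U_norm)
  qed
  have 2: "((\<lambda>t. U t w0 - U s w0) \<longlongrightarrow> 0) (at s)"
    using LIM_zero[OF U_cont[of w0 s]] .
  have "((\<lambda>t. U t (w t - w0) + (U t w0 - U s w0)) \<longlongrightarrow> 0) (at s)"
    using tendsto_add[OF 1 2] by simp
  then have "((\<lambda>t. U t (w t) - U s w0) \<longlongrightarrow> 0) (at s)"
    by (simp add: U_diff)
  then show ?thesis by (rule LIM_zero_cancel)
qed

lemma Um_cont: "((\<lambda>t. U (- t) x) \<longlongrightarrow> U (- s) x) (at s)"
proof -
  have "isCont (\<lambda>t. U t x) (- s)" using U_cont[of x "- s"] by (simp add: isCont_def)
  then have "isCont (\<lambda>t. U (- t) x) s"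
    using isCont_o2[where f=uminus and a=s and g="\<lambda>t. U t x"] by auto
  then show ?thesis by (simp add: isCont_def)
qed

lemma quot_shift: "(U (t + k) x - U t x) /\<^sub>R k = U t ((U k x - x) /\<^sub>R k)"
  by (simp add: U_comp[symmetric] U_diff U_scale)

lemma U_vderiv:
  assumes "x \<in> D"
  shows "((\<lambda>t. U t x) has_vector_derivative U t (iA x)) (at t)"
proof (rule vderiv_from_quotient)
  have "((\<lambda>k. U t ((U k x - x) /\<^sub>R k)) \<longlongrightarrow> U t (iA x)) (at 0)"
    using bounded_linear.tendsto[OF U_bl D_gen[OF assms]] .
  then show "((\<lambda>k. (U (t + k) x - U t x) /\<^sub>R k) \<longlongrightarrow> U t (iA x)) (at 0)"
    by (simp add: quot_shift)
qed

lemma D_shift: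
  assumes "x \<in> D"
  shows "U t x \<in> D" "iA (U t x) = U t (iA x)"
proof -
  have lim: "((\<lambda>k. (U k (U t x) - U t x) /\<^sub>R k) \<longlongrightarrow> U t (iA x)) (at 0)"
  proof -
    have "((\<lambda>k. U t ((U k x - x) /\<^sub>R k)) \<longlongrightarrow> U t (iA x)) (at 0)"
      using bounded_linear.tendsto[OF U_bl D_gen[OF assms]] .
    moreover have "U t ((U k x - x) /\<^sub>R k) = (U k (U t x) - U t x) /\<^sub>R k" for k
      by (simp add: U_comp U_diff U_scale add.commute)
    ultimately show ?thesis by simp
  qed
  show D: "U t x \<in> D" using D_conv[OF lim] .
  show "iA (U t x) = U t (iA x)"
    using tendsto_unique[OF _ D_gen[OF D] lim] by simp
qed

lemma Um_vderiv:
  assumes "x \<in> D"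
  shows "((\<lambda>t. U (- t) x) has_vector_derivative - U (- t) (iA x)) (at t)"
proof -
  have "(uminus has_vector_derivative (-1)) (at t)"
    using has_real_derivative_iff_has_vector_derivative[THEN iffD1, OF DERIV_minus[OF DERIV_ident]] by simp
  from vector_diff_chain_at[OF this U_vderiv[OF assms, of "- t"]]
  show ?thesis by (simp add: o_def)
qed

definition G :: "'v \<Rightarrow> real \<Rightarrow> 'v" where "G x t = U t (W (U (- t) x))"
definition K :: "'v \<Rightarrow> real \<Rightarrow> 'v" where "K x t = - U t (B (U (- t) x))"

lemma K_norm: "norm (K x t) \<le> nB * norm x"
  unfolding K_def using B_bd[of "U (- t) x"] by (simp add: U_norm)

lemma K_diff: "K x t - K y t = K (x - y) t"
  unfolding K_def by (simp add: U_diff B_diff)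

lemma G_diff: "G x t - G y t = G (x - y) t"
  unfolding G_def by (simp add: U_diff W_diff)

lemma G_norm: "norm (G x t) \<le> nW * norm x"
  unfolding G_def using W_bd[of "U (- t) x"] by (simp add: U_norm)

lemma K_cont: "((\<lambda>t. K x t) \<longlongrightarrow> K x s) (at s)"
proof -
  have "((\<lambda>t. B (U (- t) x)) \<longlongrightarrow> B (U (- s) x)) (at s)"
    using bounded_linear.tendsto[OF B_bl Um_cont] .
  from tendsto_minus[OF U_tendsto_comp[OF this]] show ?thesis by (simp add: K_def)
qed

lemma G_cont: "((\<lambda>t. G x t) \<longlongrightarrow> G x s) (at s)"
proof -
  have "((\<lambda>t. W (U (- t) x)) \<longlongrightarrow> W (U (- s) x)) (at s)"
    using bounded_linear.tendsto[OF W_bl Um_cont] .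
  from U_tendsto_comp[OF this] show ?thesis by (simp add: G_def)
qed

lemma psi_deriv_D:
  assumes x: "x \<in> D" and y: "y \<in> D"
  shows "((\<lambda>t. inner y (G x t)) has_real_derivative inner y (K x t)) (at t)"
proof -
  have bb: "bounded_bilinear (\<lambda>a b. inner a (W b))"
    using bounded_bilinear.comp[OF bounded_bilinear_inner bounded_linear_ident W_bl] by simp
  have eq: "(\<lambda>t. inner y (G x t)) = (\<lambda>t. inner (U (- t) y) (W (U (- t) x)))"
    by (rule ext) (simp add: G_def inner_commute[of y] U_adj)
  have d: "((\<lambda>t. inner (U (- t) y) (W (U (- t) x))) has_vector_derivative
      (inner (U (- t) y) (W (- U (- t) (iA x))) + inner (- U (- t) (iA y)) (W (U (- t) x)))) (at t)"
    using bounded_bilinear.has_vector_derivative[OF bb Um_vderiv[OF y] Um_vderiv[OF x]] .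
  have xt: "U (- t) x \<in> D" "iA (U (- t) x) = U (- t) (iA x)" using D_shift[OF x] by auto
  have yt: "U (- t) y \<in> D" "iA (U (- t) y) = U (- t) (iA y)" using D_shift[OF y] by auto
  have Wm: "W (- z) = - W z" for z using W_lin linear_neg by blast
  have "inner (U (- t) y) (W (- U (- t) (iA x))) + inner (- U (- t) (iA y)) (W (U (- t) x))
      = - (inner (W (U (- t) y)) (iA (U (- t) x)) + inner (iA (U (- t) y)) (W (U (- t) x)))"
    by (simp add: Wm xt yt W_sym)
  also have "\<dots> = - inner (U (- t) y) (B (U (- t) x))"
    using form[OF xt(1) yt(1)] by simp
  also have "\<dots> = inner y (K x t)"
    by (simp add: K_def inner_commute[of y] U_adj)
  finally show ?thesis
    using d unfolding eq has_real_derivative_iff_has_vector_derivative by simp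
qed

definition dseq :: "'v \<Rightarrow> nat \<Rightarrow> 'v" where
  "dseq x n = (SOME d. d \<in> D \<and> norm (x - d) < inverse (real (Suc n)))"

lemma dseq: "dseq x n \<in> D" "norm (x - dseq x n) < inverse (real (Suc n))"
proof -
  have "\<exists>d. d \<in> D \<and> norm (x - d) < inverse (real (Suc n))"
    using D_dense[of "inverse (real (Suc n))" x] by auto
  from someI_ex[OF this] show "dseq x n \<in> D" "norm (x - dseq x n) < inverse (real (Suc n))"
    unfolding dseq_def by auto
qed

lemma dseq_lim: "dseq x \<longlonglongrightarrow> x"
proof -
  have "(\<lambda>n. dseq x n - x) \<longlonglongrightarrow> 0"
  proof (rule Lim_null_comparison)
    show "\<forall>\<^sub>F n in sequentially. norm (dseq x n - x) \<le> inverse (real (Suc n))"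
      using dseq(2)[of x] by (simp add: norm_minus_commute less_imp_le)
    show "(\<lambda>n. inverse (real (Suc n))) \<longlonglongrightarrow> 0" by (rule LIMSEQ_inverse_real_of_nat)
  qed
  then show ?thesis by (rule LIM_zero_cancel)
qed

lemma G_bl: "bounded_linear (\<lambda>x. G x t)"
  unfolding G_def
  using bounded_linear_compose[OF U_bl bounded_linear_compose[OF W_bl U_bl]] by (simp add: o_def)

lemma G_lim: "(xs \<longlongrightarrow> x) F \<Longrightarrow> ((\<lambda>n. G (xs n) t) \<longlongrightarrow> G x t) F"
  using bounded_linear.tendsto[OF G_bl] .

lemma psi_deriv: "((\<lambda>t. inner y (G x t)) has_real_derivative inner y (K x t)) (at t)"
proof -
  define xn where "xn = dseq x"
  define yn where "yn = dseq y"
  define f where "f n t = inner (yn n) (G (xn n) t)" for n t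
  define f' where "f' n t = (*) (inner (yn n) (K (xn n) t))" for n t
  define g' where "g' t = (*) (inner y (K x t))" for t
  define M where "M = nB * (norm x + 1 + norm y)"
  have derf: "(f n has_derivative f' n t) (at t within UNIV)" for n t
    using psi_deriv_D[OF dseq(1)[of x n] dseq(1)[of y n], of t]
    unfolding f_def f'_def xn_def yn_def has_field_derivative_def by simp
  have bound: "\<bar>inner (yn n) (K (xn n) t) - inner y (K x t)\<bar> \<le> M * inverse (real (Suc n))" for n t
  proof -
    have ey: "norm (yn n - y) \<le> inverse (real (Suc n))"
      using dseq(2)[of y n] by (simp add: yn_def norm_minus_commute)
    have ex: "norm (xn n - x) \<le> inverse (real (Suc n))"
      using dseq(2)[of x n] by (simp add: xn_def norm_minus_commute)
    have inv1: "inverse (real (Suc n)) \<le> 1" by (simp add: inverse_le_1_iff)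
    have nx: "norm (xn n) \<le> norm x + 1"
      using norm_triangle_ineq[of "xn n - x" x] ex inv1 by simp
    have "inner (yn n) (K (xn n) t) - inner y (K x t)
        = inner (yn n - y) (K (xn n) t) + inner y (K (xn n - x) t)"
      by (simp add: inner_diff_left K_diff[symmetric] inner_diff_right)
    also have "\<bar>\<dots>\<bar> \<le> norm (yn n - y) * norm (K (xn n) t) + norm y * norm (K (xn n - x) t)"
      by (rule order.trans[OF abs_triangle_ineq add_mono]) (simp_all add: Cauchy_Schwarz_ineq2)
    also have "\<dots> \<le> inverse (real (Suc n)) * (nB * (norm x + 1)) + norm y * (nB * inverse (real (Suc n)))"
    proof (rule add_mono)
      have "norm (K (xn n) t) \<le> nB * (norm x + 1)"
        using K_norm[of "xn n" t] mult_left_mono[OF nx nB_nn] by linarith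
      then show "norm (yn n - y) * norm (K (xn n) t) \<le> inverse (real (Suc n)) * (nB * (norm x + 1))"
        using ey by (intro mult_mono) auto
      have "norm (K (xn n - x) t) \<le> nB * inverse (real (Suc n))"
        using K_norm[of "xn n - x" t] mult_left_mono[OF ex nB_nn] by linarith
      then show "norm y * norm (K (xn n - x) t) \<le> norm y * (nB * inverse (real (Suc n)))"
        by (intro mult_left_mono) auto
    qed
    also have "\<dots> = M * inverse (real (Suc n))" by (simp add: M_def algebra_simps)
    finally show ?thesis .
  qed
  have nle: "\<forall>\<^sub>F n in sequentially. \<forall>t\<in>UNIV. \<forall>h. norm (f' n t h - g' t h) \<le> e * norm h"
    if "e > 0" for e
  proof -
    have "(\<lambda>n. M * inverse (real (Suc n))) \<longlonglongrightarrow> M * 0"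
      by (intro tendsto_mult tendsto_const LIMSEQ_inverse_real_of_nat)
    then have "\<forall>\<^sub>F n in sequentially. M * inverse (real (Suc n)) < e"
      using order_tendstoD(2)[of _ 0 sequentially e] that by simp
    then show ?thesis
    proof (rule eventually_mono)
      fix n assume n: "M * inverse (real (Suc n)) < e"
      show "\<forall>t\<in>UNIV. \<forall>h. norm (f' n t h - g' t h) \<le> e * norm h"
      proof (intro ballI allI)
        fix t h
        have "norm (f' n t h - g' t h) = \<bar>inner (yn n) (K (xn n) t) - inner y (K x t)\<bar> * \<bar>h\<bar>"
          by (simp add: f'_def g'_def left_diff_distrib[symmetric] abs_mult)
        also have "\<dots> \<le> e * norm h"
          using bound[of n t] n by (simp add: mult_right_mono)
        finally show "norm (f' n t h - g' t h) \<le> e * norm h" .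
      qed
    qed
  qed
  have fl: "(\<lambda>n. f n t) \<longlonglongrightarrow> inner y (G x t)" for t
    unfolding f_def xn_def yn_def
    by (intro tendsto_inner dseq_lim G_lim)
  obtain g where g: "\<And>t. (\<lambda>n. f n t) \<longlonglongrightarrow> g t" "\<And>t. (g has_derivative g' t) (at t within UNIV)"
    using has_derivative_sequence[OF convex_UNIV derf nle UNIV_I fl[of 0]] by blast
  have "g = (\<lambda>t. inner y (G x t))"
    using LIMSEQ_unique[OF g(1) fl] by auto
  then show ?thesis using g(2)[of t] unfolding has_field_derivative_def g'_def by simp
qed

lemma G_strong: "((\<lambda>h. (G x (s + h) - G x s) /\<^sub>R h) \<longlongrightarrow> K x s) (at 0)"
  unfolding LIM_eq
proof (intro allI impI)
  fix r :: real assume r: "r > 0"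
  from K_cont[of x s, unfolded LIM_eq] r obtain \<delta> where \<delta>: "\<delta> > 0"
    "\<And>\<xi>. \<xi> \<noteq> s \<and> norm (\<xi> - s) < \<delta> \<Longrightarrow> norm (K x \<xi> - K x s) < r" by blast
  show "\<exists>\<delta>>0. \<forall>h. h \<noteq> 0 \<and> norm (h - 0) < \<delta> \<longrightarrow> norm ((G x (s + h) - G x s) /\<^sub>R h - K x s) < r"
  proof (intro exI[of _ \<delta>] conjI allI impI)
    show "\<delta> > 0" by fact
    fix h :: real assume h: "h \<noteq> 0 \<and> norm (h - 0) < \<delta>"
    define v where "v = (G x (s + h) - G x s) /\<^sub>R h - K x s"
    define ch where "ch t = inner v (G x t) - t * inner v (K x s)" for t
    have dch: "(ch has_real_derivative (inner v (K x t) - inner v (K x s))) (at t)" for t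
      unfolding ch_def by (auto intro!: derivative_eq_intros psi_deriv)
    obtain \<xi> where \<xi>: "min s (s + h) \<le> \<xi>" "\<xi> \<le> max s (s + h)"
      "ch (s + h) - ch s = (s + h - s) * (inner v (K x \<xi>) - inner v (K x s))"
      using mvt_real_any[OF dch, of s "s + h"] by blast
    have hv: "G x (s + h) - G x s - h *\<^sub>R K x s = h *\<^sub>R v"
      using h by (simp add: v_def algebra_simps)
    have "ch (s + h) - ch s = inner v (G x (s + h) - G x s - h *\<^sub>R K x s)"
      by (simp add: ch_def inner_diff_right algebra_simps)
    also have "\<dots> = h * inner v v" by (simp add: hv)
    finally have "h * inner v v = h * inner v (K x \<xi> - K x s)"
      using \<xi>(3) by (simp add: inner_diff_right) (metis)
    then have vv: "inner v v = inner v (K x \<xi> - K x s)" using h by simp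
    have kb: "norm (K x \<xi> - K x s) < r"
    proof (cases "\<xi> = s")
      case True then show ?thesis using r by simp
    next
      case False
      have "norm (\<xi> - s) \<le> norm h" using \<xi>(1,2) by (auto simp: min_def max_def split: if_splits)
      then show ?thesis using \<delta>(2)[of \<xi>] False h by simp
    qed
    have "norm v ^ 2 \<le> norm v * norm (K x \<xi> - K x s)"
      using vv Cauchy_Schwarz_ineq2[of v "K x \<xi> - K x s"] by (simp add: power2_norm_eq_inner)
    then have "norm v \<le> norm (K x \<xi> - K x s)"
      by (cases "norm v = 0") (auto simp: power2_eq_square)
    then show "norm ((G x (s + h) - G x s) /\<^sub>R h - K x s) < r"
      using kb by (simp add: v_def)
  qed
qed

end

lemma sq_le_cancel:
  fixes a M :: real
  assumes "0 \<le> a" "0 \<le> M" "a^2 \<le> a * M"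
  shows "a \<le> M"
proof (cases "a = 0")
  case True then show ?thesis using assms by simp
next
  case False
  then have "0 < a" using assms by simp
  moreover have "a * a \<le> a * M" using assms(3) by (simp add: power2_eq_square)
  ultimately show ?thesis by (simp add: mult_le_cancel_left_pos)
qed

context abs_setting begin

lemma U_contf: "continuous_on S (\<lambda>t. U t z)"
  using U_cont by (intro continuous_at_imp_continuous_on) (auto simp: isCont_def)

lemma U_lip_D:
  assumes z: "z \<in> D"
  shows "norm (U t z - z) \<le> \<bar>t\<bar> * norm (iA z)"
proof -
  have der: "((\<lambda>\<tau>. U \<tau> z) has_derivative (\<lambda>h. h *\<^sub>R U \<tau> (iA z))) (at \<tau>)" for \<tau>
    using U_vderiv[OF z, of \<tau>] unfolding has_vector_derivative_def .
  consider "t = 0" | "0 < t" | "t < 0" by linarith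
  then show ?thesis
  proof cases
    case 1 then show ?thesis by (simp add: U_0)
  next
    case 2
    from mvt_general[OF 2 U_contf der] obtain \<xi> where
      "norm (U t z - U 0 z) \<le> norm ((t - 0) *\<^sub>R U \<xi> (iA z))" by blast
    then show ?thesis using 2 by (simp add: U_0 U_norm)
  next
    case 3
    from mvt_general[OF 3 U_contf der] obtain \<xi> where
      "norm (U 0 z - U t z) \<le> norm ((0 - t) *\<^sub>R U \<xi> (iA z))" by blast
    then show ?thesis using 3 by (simp add: U_0 U_norm norm_minus_commute)
  qed
qed

lemma holder:
  fixes ca cb eps :: real
  assumes eps: "eps > 0" and ca: "ca \<ge> 0" and cb: "cb \<ge> 0"
    and Pex: "\<And>R. R \<ge> 1 \<Longrightarrow> \<exists>P. (\<forall>z. P z \<in> D \<and> norm (iA (P z)) \<le> cb * R * norm z)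
        \<and> (\<forall>z. P (P z) = P z) \<and> (\<forall>a b. inner (P a) b = inner a (P b))
        \<and> (\<forall>a b. P (a - b) = P a - P b)
        \<and> (\<forall>z. norm (B z - P (B z)) \<le> ca * R powr (- eps) * norm z)
        \<and> (\<forall>z. norm (B (z - P z)) \<le> ca * R powr (- eps) * norm z)"
  shows "\<exists>c\<ge>0. \<forall>t w. norm (U t (B (U (- t) w)) - B w) \<le> c * \<bar>t\<bar> powr (eps / (1 + eps)) * norm w"
proof -
  have main: "norm (U t (B (U (- t) w)) - B w) \<le> (2 * nB * cb * \<bar>t\<bar> * R + 4 * ca * R powr (- eps)) * norm w"
    if R: "R \<ge> 1" for R t w
  proof -
    obtain P where PD: "\<And>z. P z \<in> D" and PA: "\<And>z. norm (iA (P z)) \<le> cb * R * norm z"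
      and PP: "\<And>z. P (P z) = P z" and Psym: "\<And>a b. inner (P a) b = inner a (P b)"
      and Pdiff: "\<And>a b. P (a - b) = P a - P b"
      and PB1: "\<And>z. norm (B z - P (B z)) \<le> ca * R powr (- eps) * norm z"
      and PB2: "\<And>z. norm (B (z - P z)) \<le> ca * R powr (- eps) * norm z"
      using Pex[OF R] by blast
    have A1: "norm (U \<tau> (P z) - P z) \<le> \<bar>\<tau>\<bar> * cb * R * norm z" for \<tau> z
      using U_lip_D[OF PD[of z], of \<tau>] PA[of z]
      by (smt (verit, ccfv_SIG) abs_ge_zero mult.assoc mult_left_mono)
    have A2: "norm (P (U \<tau> x - x)) \<le> \<bar>\<tau>\<bar> * cb * R * norm x" for \<tau> x
    proof -
      define v where "v = P (U \<tau> x - x)"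
      have "inner v v = inner (U \<tau> x - x) (P (P (U \<tau> x - x)))"
        unfolding v_def by (simp add: Psym)
      also have "\<dots> = inner (P (U \<tau> x - x)) (U \<tau> x - x)"
        by (simp add: PP Psym inner_commute)
      also have "\<dots> = inner (U (- \<tau>) v - v) x"
        by (simp add: v_def inner_diff_right inner_diff_left U_adj inner_commute)
      also have "\<dots> \<le> norm (U (- \<tau>) v - v) * norm x"
        by (rule order.trans[OF Cauchy_Schwarz_ineq2 [THEN abs_le_D1]]) simp
      also have "\<dots> \<le> (\<bar>\<tau>\<bar> * cb * R * norm v) * norm x"
      proof -
        have "v = P v" by (simp add: v_def PP)
        then have "norm (U (- \<tau>) v - v) \<le> \<bar>- \<tau>\<bar> * cb * R * norm v"
          using A1[of "- \<tau>" v] by metis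
        then show ?thesis by (intro mult_right_mono) auto
      qed
      finally have ineq: "norm v ^ 2 \<le> norm v * (\<bar>\<tau>\<bar> * cb * R * norm x)"
        by (simp add: power2_norm_eq_inner algebra_simps)
      have M0: "0 \<le> \<bar>\<tau>\<bar> * cb * R * norm x" using cb R by simp
      have "norm v \<le> \<bar>\<tau>\<bar> * cb * R * norm x"
        using sq_le_cancel[OF norm_ge_zero M0 ineq] .
      then show ?thesis by (simp add: v_def)
    qed
    define y where "y = U (- t) w"
    have ny: "norm y = norm w" by (simp add: y_def U_norm)
    define q where "q = B y - P (B y)"
    have t1: "U t (B y) - B y = (U t (P (B y)) - P (B y)) + (U t q - q)"
      by (simp add: q_def U_diff)
    have n1: "norm (U t (P (B y)) - P (B y)) \<le> \<bar>t\<bar> * cb * R * (nB * norm w)"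
    proof -
      have "\<bar>t\<bar> * cb * R * norm (B y) \<le> \<bar>t\<bar> * cb * R * (nB * norm w)"
        using B_bd[of y] ny cb R by (intro mult_left_mono) auto
      then show ?thesis using A1[of t "B y"] by linarith
    qed
    have n2: "norm (U t q - q) \<le> 2 * (ca * R powr (- eps) * norm w)"
    proof -
      have "norm (U t q - q) \<le> norm (U t q) + norm q" by (rule norm_triangle_ineq4)
      also have "\<dots> = 2 * norm q" by (simp add: U_norm)
      also have "\<dots> \<le> 2 * (ca * R powr (- eps) * norm w)"
        using PB1[of y] ny by (simp add: q_def)
      finally show ?thesis .
    qed
    have t2: "B y - B w = B (P (y - w)) + B ((y - w) - P (y - w))"
      by (simp add: B_diff)
    have n3: "norm (B (P (y - w))) \<le> nB * (\<bar>t\<bar> * cb * R * norm w)"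
    proof -
      have "norm (P (y - w)) \<le> \<bar>- t\<bar> * cb * R * norm w"
        using A2[of "- t" w] by (simp add: y_def)
      then show ?thesis using B_bd[of "P (y - w)"] nB_nn
        by (smt (verit) abs_minus_cancel mult_left_mono)
    qed
    have n4: "norm (B ((y - w) - P (y - w))) \<le> ca * R powr (- eps) * (2 * norm w)"
    proof -
      have "norm (y - w) \<le> 2 * norm w"
        using norm_triangle_ineq4[of y w] ny by simp
      moreover have "0 \<le> ca * R powr (- eps)" using ca by simp
      ultimately show ?thesis using PB2[of "y - w"] by (smt (verit) mult_left_mono)
    qed
    have "norm (U t (B y) - B w) \<le> norm (U t (B y) - B y) + norm (B y - B w)"
      using norm_triangle_ineq[of "U t (B y) - B y" "B y - B w"] by simp
    also have "\<dots> \<le> (norm (U t (P (B y)) - P (B y)) + norm (U t q - q))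
        + (norm (B (P (y - w))) + norm (B ((y - w) - P (y - w))))"
      unfolding t1 t2 by (intro add_mono norm_triangle_ineq)
    also have "\<dots> \<le> (\<bar>t\<bar> * cb * R * (nB * norm w) + 2 * (ca * R powr (- eps) * norm w))
        + (nB * (\<bar>t\<bar> * cb * R * norm w) + ca * R powr (- eps) * (2 * norm w))"
      by (intro add_mono n1 n2 n3 n4)
    also have "\<dots> = (2 * nB * cb * \<bar>t\<bar> * R + 4 * ca * R powr (- eps)) * norm w"
      by (simp add: algebra_simps)
    finally show ?thesis by (simp add: y_def)
  qed
  define \<delta> where "\<delta> = eps / (1 + eps)"
  define c where "c = 2 * nB * cb + 4 * ca + 2 * nB"
  have \<delta>: "0 < \<delta>" using eps by (simp add: \<delta>_def)
  have c0: "c \<ge> 0" using ca cb nB_nn by (simp add: c_def)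
  have "norm (U t (B (U (- t) w)) - B w) \<le> c * \<bar>t\<bar> powr \<delta> * norm w" for t w
  proof -
    consider "t = 0" | "0 < \<bar>t\<bar>" "\<bar>t\<bar> \<le> 1" | "1 < \<bar>t\<bar>" by linarith
    then show ?thesis
    proof cases
      case 1 then show ?thesis by (simp add: U_0)
    next
      case 2
      define R where "R = \<bar>t\<bar> powr (- 1 / (1 + eps))"
      have R1: "R \<ge> 1"
        using powr_mono2'[of "- 1 / (1 + eps)" "\<bar>t\<bar>" 1] 2 eps by (simp add: R_def)
      have e1: "\<bar>t\<bar> * R = \<bar>t\<bar> powr \<delta>"
      proof -
        have p1: "\<bar>t\<bar> powr 1 = \<bar>t\<bar>" using 2 by simp
        have "\<bar>t\<bar> * R = \<bar>t\<bar> powr 1 * \<bar>t\<bar> powr (- 1 / (1 + eps))" by (simp only: p1 R_def)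
        also have "\<dots> = \<bar>t\<bar> powr (1 + (- 1 / (1 + eps)))" by (rule powr_add[symmetric])
        also have "1 + (- 1 / (1 + eps)) = \<delta>" using eps by (simp add: \<delta>_def field_simps)
        finally show ?thesis .
      qed
      have e2: "R powr (- eps) = \<bar>t\<bar> powr \<delta>"
        unfolding R_def powr_powr using eps by (simp add: \<delta>_def field_simps)
      have "norm (U t (B (U (- t) w)) - B w) \<le> (2 * nB * cb * (\<bar>t\<bar> * R) + 4 * ca * R powr (- eps)) * norm w"
        using main[OF R1, of t w] by (simp add: mult.assoc)
      also have "\<dots> = (2 * nB * cb + 4 * ca) * \<bar>t\<bar> powr \<delta> * norm w"
        unfolding e1 e2 by (simp add: algebra_simps)
      also have "\<dots> \<le> c * \<bar>t\<bar> powr \<delta> * norm w"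
        using nB_nn by (intro mult_right_mono) (auto simp: c_def)
      finally show ?thesis .
    next
      case 3
      have "norm (U t (B (U (- t) w)) - B w) \<le> norm (U t (B (U (- t) w))) + norm (B w)"
        by (rule norm_triangle_ineq4)
      also have "\<dots> \<le> nB * norm w + nB * norm w"
        using B_bd[of "U (- t) w"] B_bd[of w] by (simp add: U_norm)
      also have "\<dots> \<le> c * \<bar>t\<bar> powr \<delta> * norm w"
      proof -
        have "1 \<le> \<bar>t\<bar> powr \<delta>" using 3 \<delta> by (intro ge_one_powr_ge_zero) auto
        have "0 \<le> nB * cb" using cb nB_nn by simp
        then have cge: "2 * nB \<le> c" using ca unfolding c_def by linarith
        have "c * 1 \<le> c * \<bar>t\<bar> powr \<delta>" by (rule mult_left_mono[OF \<open>1 \<le> \<bar>t\<bar> powr \<delta>\<close> c0])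
        then have "2 * nB \<le> c * \<bar>t\<bar> powr \<delta>" using cge by linarith
        then have "(2 * nB) * norm w \<le> (c * \<bar>t\<bar> powr \<delta>) * norm w" by (rule mult_right_mono) simp
        then show ?thesis by simp
      qed
      finally show ?thesis .
    qed
  qed
  then show ?thesis using c0 unfolding \<delta>_def by blast
qed

lemma second_diff:
  assumes c: "c \<ge> 0" and dl: "\<delta> > 0"
    and hold: "\<And>t w. norm (U t (B (U (- t) w)) - B w) \<le> c * \<bar>t\<bar> powr \<delta> * norm w"
    and s: "s \<ge> 0"
  shows "norm (G x s + G x (- s) - 2 *\<^sub>R W x) \<le> s * (c * (2 * s) powr \<delta>) * norm x"
proof -
  define v where "v = G x s + G x (- s) - 2 *\<^sub>R W x"
  define ch where "ch t = inner v (G x t) + inner v (G x (- t))" for t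
  have dch: "(ch has_real_derivative (inner v (K x t) - inner v (K x (- t)))) (at t)" for t
  proof -
    have b: "((\<lambda>t. inner v (G x (- t))) has_real_derivative inner v (K x (- t)) * (- 1)) (at t)"
      by (rule DERIV_chain2[OF psi_deriv]) (auto intro!: derivative_eq_intros)
    have a: "((\<lambda>t. inner v (G x t)) has_real_derivative inner v (K x t)) (at t)" by (rule psi_deriv)
    from DERIV_add[OF a b] show ?thesis unfolding ch_def by simp
  qed
  obtain \<xi> where \<xi>: "min 0 s \<le> \<xi>" "\<xi> \<le> max 0 s"
    "ch s - ch 0 = (s - 0) * (inner v (K x \<xi>) - inner v (K x (- \<xi>)))"
    using mvt_real_any[OF dch, of 0 s] by blast
  have G0: "G x 0 = W x" by (simp add: G_def U_0)
  have "ch s - ch 0 = inner v v"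
    by (simp add: ch_def G0 v_def inner_diff_right inner_add_right)
  then have vv: "inner v v = s * inner v (K x \<xi> - K x (- \<xi>))"
    using \<xi>(3) by (simp add: inner_diff_right)
  have kb: "norm (K x \<xi> - K x (- \<xi>)) \<le> c * (2 * s) powr \<delta> * norm x"
  proof -
    define w where "w = U (- \<xi>) x"
    have e1: "U (- (- 2 * \<xi>)) w = U \<xi> x"
    proof -
      have "U (- (- 2 * \<xi>)) w = U (- (- 2 * \<xi>) + - \<xi>) x" by (simp only: w_def U_comp)
      also have "- (- 2 * \<xi>) + - \<xi> = \<xi>" by simp
      finally show ?thesis .
    qed
    have e2: "U \<xi> (U (- 2 * \<xi>) z) = U (- \<xi>) z" for z
    proof -
      have "U \<xi> (U (- 2 * \<xi>) z) = U (\<xi> + - 2 * \<xi>) z" by (rule U_comp)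
      also have "\<xi> + - 2 * \<xi> = - \<xi>" by simp
      finally show ?thesis .
    qed
    have "K x \<xi> - K x (- \<xi>) = U \<xi> (U (- 2 * \<xi>) (B (U (- (- 2 * \<xi>)) w)) - B w)"
      unfolding K_def U_diff e1 e2 by (simp add: w_def)
    then have "norm (K x \<xi> - K x (- \<xi>)) = norm (U (- 2 * \<xi>) (B (U (- (- 2 * \<xi>)) w)) - B w)"
      by (simp add: U_norm)
    also have "\<dots> \<le> c * \<bar>- 2 * \<xi>\<bar> powr \<delta> * norm w" by (rule hold)
    also have "\<dots> \<le> c * (2 * s) powr \<delta> * norm x"
    proof -
      have "\<bar>- 2 * \<xi>\<bar> powr \<delta> \<le> (2 * s) powr \<delta>"
        using \<xi>(1,2) s dl by (intro powr_mono2) auto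
      then show ?thesis using c by (simp add: w_def U_norm mult_left_mono mult_right_mono)
    qed
    finally show ?thesis .
  qed
  have "norm v ^ 2 \<le> s * (norm v * norm (K x \<xi> - K x (- \<xi>)))"
    using vv Cauchy_Schwarz_ineq2[of v "K x \<xi> - K x (- \<xi>)"] s
    by (simp add: power2_norm_eq_inner mult_left_mono)
  also have "\<dots> \<le> s * (norm v * (c * (2 * s) powr \<delta> * norm x))"
    using kb s by (intro mult_left_mono) auto
  finally have ineq: "norm v ^ 2 \<le> norm v * (s * (c * (2 * s) powr \<delta>) * norm x)" by (simp add: algebra_simps)
  have M0: "0 \<le> s * (c * (2 * s) powr \<delta>) * norm x" using s c by simp
  have "norm v \<le> s * (c * (2 * s) powr \<delta>) * norm x"
    using sq_le_cancel[OF norm_ge_zero M0 ineq] .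
  then show ?thesis by (simp add: v_def)
qed

end

lemma vf_Vec: "f \<in> l2 \<Longrightarrow> vf (Vec f) = f"
  by (rule Vec_inverse)

lemma vf_l2: "vf x \<in> l2" using vf by blast

lemma l2norm_Vec: "f \<in> l2 \<Longrightarrow> l2norm f = norm (Vec f)"
  by (simp add: norm_vec_l2norm vf_Vec)

lemma l2norm_nonneg: "0 \<le> l2norm f"
  by (simp add: l2norm_def infsum_nonneg)

lemma Vec_diff: "f \<in> l2 \<Longrightarrow> g \<in> l2 \<Longrightarrow> Vec (\<lambda>n. f n - g n) = Vec f - Vec g"
  by (simp add: vf_inject[symmetric] vf_minus vf_Vec l2_diff)

lemma Vec_add: "f \<in> l2 \<Longrightarrow> g \<in> l2 \<Longrightarrow> Vec (\<lambda>n. f n + g n) = Vec f + Vec g"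
  by (simp add: vf_inject[symmetric] vf_plus vf_Vec l2_add)

lemma l2_tendsto_iff:
  assumes "\<And>s. F s \<in> l2" "g \<in> l2"
  shows "l2_tendsto F g Fl \<longleftrightarrow> ((\<lambda>s. Vec (F s)) \<longlongrightarrow> Vec g) Fl"
proof -
  have "l2norm (\<lambda>n. F s n - g n) = norm (Vec (F s) - Vec g)" for s
    using assms by (simp add: l2norm_Vec l2_diff Vec_diff)
  then show ?thesis
    unfolding l2_tendsto_def
    by (simp add: tendsto_norm_zero_iff LIM_zero_iff[of "\<lambda>s. Vec (F s)"] )
qed

lemma l2norm_scale: "f \<in> l2 \<Longrightarrow> l2norm (\<lambda>n. c * f n) = cmod c * l2norm f"
proof -
  assume f: "f \<in> l2"
  have "infsum (\<lambda>n. (cmod (c * f n))^2) UNIV = (cmod c)^2 * infsum (\<lambda>n. (cmod (f n))^2) UNIV"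
    by (simp add: norm_mult power_mult_distrib infsum_cmult_right')
  then show ?thesis by (simp add: l2norm_def real_sqrt_mult)
qed

lemma l2inner_Re: "f \<in> l2 \<Longrightarrow> g \<in> l2 \<Longrightarrow> Re (l2inner f g) = inner (Vec f) (Vec g)"
  by (simp add: inner_vec_l2inner vf_Vec)

lemma l2inner_CS: assumes "f \<in> l2" "g \<in> l2" shows "cmod (l2inner f g) \<le> l2norm f * l2norm g"
proof (cases "l2inner f g = 0")
  case True then show ?thesis by (simp add: l2norm_nonneg)
next
  case False
  define z where "z = l2inner f g"
  define u where "u = cnj z / complex_of_real (cmod z)"
  have cu: "cmod u = 1" using False by (simp add: u_def z_def norm_divide)
  have zz: "cnj z * z = complex_of_real (cmod z) * complex_of_real (cmod z)"
    by (metis complex_norm_square mult.commute of_real_mult power2_eq_square)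
  have znz: "z \<noteq> 0" using False by (simp add: z_def)
  have "u * z = (cnj z * z) / complex_of_real (cmod z)" by (simp add: u_def)
  also have "\<dots> = complex_of_real (cmod z)" using znz by (simp add: zz)
  finally have "u * z = complex_of_real (cmod z)" .
  then have "cmod z = Re (l2inner f (\<lambda>n. u * g n))"
    using assms by (simp add: l2inner_scale_right z_def)
  also have "\<dots> = inner (Vec f) (Vec (\<lambda>n. u * g n))"
    using assms by (simp add: l2inner_Re l2_scale)
  also have "\<dots> \<le> norm (Vec f) * norm (Vec (\<lambda>n. u * g n))"
    by (rule order.trans[OF Cauchy_Schwarz_ineq2[THEN abs_le_D1]]) simp
  also have "\<dots> = l2norm f * l2norm g"
    using assms by (simp add: l2norm_Vec[symmetric] l2_scale l2norm_scale cu)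
  finally show ?thesis by (simp add: z_def)
qed

definition cinner :: "'a lv \<Rightarrow> 'a lv \<Rightarrow> complex" where
  "cinner x y = l2inner (vf x) (vf y)"

lemma cinner_bb: "bounded_bilinear cinner"
proof
  fix a a' b b' :: "'a lv" and r :: real
  show "cinner (a + a') b = cinner a b + cinner a' b"
    by (simp add: cinner_def vf_plus l2inner_add_left vf_l2)
  show "cinner a (b + b') = cinner a b + cinner a b'"
    by (simp add: cinner_def vf_plus l2inner_add_right vf_l2)
  show "cinner (r *\<^sub>R a) b = r *\<^sub>R cinner a b"
    by (simp add: cinner_def vf_scaleR l2inner_scale_left vf_l2 scaleR_conv_of_real)
  show "cinner a (r *\<^sub>R b) = r *\<^sub>R cinner a b"
    by (simp add: cinner_def vf_scaleR l2inner_scale_right vf_l2 scaleR_conv_of_real)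
next
  show "\<exists>K. \<forall>a b. norm (cinner a b) \<le> norm a * norm b * K"
    by (rule exI[of _ 1]) (simp add: cinner_def norm_vec_l2norm l2inner_CS vf_l2)
qed

lemma l2inner_tendsto:
  assumes "\<And>k. a k \<in> l2" "\<And>k. b k \<in> l2" "a0 \<in> l2" "b0 \<in> l2"
    and "l2_tendsto a a0 F" "l2_tendsto b b0 F"
  shows "((\<lambda>k. l2inner (a k) (b k)) \<longlongrightarrow> l2inner a0 b0) F"
proof -
  have "((\<lambda>k. cinner (Vec (a k)) (Vec (b k))) \<longlongrightarrow> cinner (Vec a0) (Vec b0)) F"
    using bounded_bilinear.tendsto[OF cinner_bb] assms l2_tendsto_iff by blast
  then show ?thesis using assms by (simp add: cinner_def vf_Vec)
qed

lemma l2_finsupp: "finite S \<Longrightarrow> (\<And>n. n \<notin> S \<Longrightarrow> f n = 0) \<Longrightarrow> f \<in> l2"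
  unfolding l2_def mem_Collect_eq
  by (rule summable_on_cong_neutral[where S=S, THEN iffD1]) auto

lemma fin_supp_l2: "fin_supp f \<Longrightarrow> f \<in> l2"
  unfolding fin_supp_def by (rule l2_finsupp) auto

lemma l2inner_fin_left:
  assumes "finite S" "\<And>n. n \<notin> S \<Longrightarrow> f n = 0"
  shows "l2inner f h = (\<Sum>n\<in>S. cnj (f n) * h n)"
proof -
  have "infsum (\<lambda>n. cnj (f n) * h n) UNIV = infsum (\<lambda>n. cnj (f n) * h n) S"
    by (rule infsum_cong_neutral) (use assms in auto)
  then show ?thesis using assms(1) by (simp add: l2inner_def)
qed

lemma l2inner_fin_right:
  assumes "finite S" "\<And>n. n \<notin> S \<Longrightarrow> h n = 0"
  shows "l2inner f h = (\<Sum>n\<in>S. cnj (f n) * h n)"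
proof -
  have "infsum (\<lambda>n. cnj (f n) * h n) UNIV = infsum (\<lambda>n. cnj (f n) * h n) S"
    by (rule infsum_cong_neutral) (use assms in auto)
  then show ?thesis using assms(1) by (simp add: l2inner_def)
qed

abbreviation upj :: "('d \<Rightarrow> nat) \<Rightarrow> 'd \<Rightarrow> ('d \<Rightarrow> nat)" where
  "upj n j \<equiv> n(j := n j + 1)"
abbreviation dnj :: "('d \<Rightarrow> nat) \<Rightarrow> 'd \<Rightarrow> ('d \<Rightarrow> nat)" where
  "dnj n j \<equiv> n(j := n j - 1)"

definition shm :: "'d \<Rightarrow> (('d \<Rightarrow> nat) \<Rightarrow> complex) \<Rightarrow> (('d \<Rightarrow> nat) \<Rightarrow> complex) \<Rightarrow> ('d \<Rightarrow> nat) \<Rightarrow> complex" where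
  "shm j c f = (\<lambda>n. if 1 \<le> n j then c n * f (dnj n j) else 0)"
definition shp :: "'d \<Rightarrow> (('d \<Rightarrow> nat) \<Rightarrow> complex) \<Rightarrow> (('d \<Rightarrow> nat) \<Rightarrow> complex) \<Rightarrow> ('d \<Rightarrow> nat) \<Rightarrow> complex" where
  "shp j c f = (\<lambda>n. c n * f (upj n j))"

lemma inj_upj: "inj (\<lambda>m. upj m j)"
  by (rule injI) (metis fun_upd_apply fun_upd_triv fun_upd_upd add_right_cancel)

lemma range_upj:
  fixes j :: 'd
  shows "range (\<lambda>m::'d \<Rightarrow> nat. upj m j) = {n. 1 \<le> n j}"
proof (intro set_eqI iffI)
  fix n :: "'d \<Rightarrow> nat" assume "n \<in> {n. 1 \<le> n j}"
  then have "n = upj (dnj n j) j" by (auto simp: fun_eq_iff)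
  then show "n \<in> range (\<lambda>m. upj m j)" by blast
qed auto

lemma notin_range_upj: "x \<notin> range (\<lambda>m. m(j := Suc (m j))) \<Longrightarrow> x j = 0"
proof (rule ccontr)
  assume a: "x \<notin> range (\<lambda>m. m(j := Suc (m j)))" and "x j \<noteq> 0"
  then have "x = (x(j := x j - 1))(j := Suc ((x(j := x j - 1)) j))" by (auto simp: fun_eq_iff)
  then show False using a by blast
qed

lemma dn_up[simp]: "dnj (upj m j) j = m" by (simp add: fun_eq_iff)
lemma up_dn: "1 \<le> n j \<Longrightarrow> upj (dnj n j) j = n" by (auto simp: fun_eq_iff)

lemma sum_reindex_up:
  fixes S :: "('d \<Rightarrow> nat) \<Rightarrow> real"
  assumes "\<And>n. n j = 0 \<Longrightarrow> S n = 0"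
  shows "(S has_sum x) UNIV \<longleftrightarrow> ((\<lambda>m. S (upj m j)) has_sum x) UNIV"
proof -
  have "(S has_sum x) UNIV \<longleftrightarrow> (S has_sum x) (range (\<lambda>m. upj m j))"
  proof (rule has_sum_cong_neutral)
    fix n assume "n \<in> range (\<lambda>m. upj m j) - UNIV" then show "S n = 0" by simp
  next
    fix n assume "n \<in> UNIV - range (\<lambda>m. upj m j)"
    then have "n j = 0" using notin_range_upj[of n j] by simp
    then show "S n = 0" by (rule assms)
  qed simp
  also have "\<dots> \<longleftrightarrow> ((\<lambda>m. S (upj m j)) has_sum x) UNIV"
    using has_sum_reindex[OF inj_upj[of j], where g=S and x=x] by (simp add: o_def)
  finally show ?thesis .
qed

lemma l2norm_sq: "f \<in> l2 \<Longrightarrow> (l2norm f)^2 = infsum (\<lambda>n. (cmod (f n))^2) UNIV"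
  by (simp add: l2norm_def infsum_nonneg)

lemma l2norm_le_from_sq:
  assumes "infsum (\<lambda>n. (cmod (g n))^2) UNIV \<le> M^2 * infsum (\<lambda>n. (cmod (f n))^2) UNIV" "0 \<le> M"
  shows "l2norm g \<le> M * l2norm f"
proof -
  have "l2norm g \<le> sqrt (M^2 * infsum (\<lambda>n. (cmod (f n))^2) UNIV)"
    unfolding l2norm_def using assms(1) by simp
  also have "\<dots> = M * l2norm f" using assms(2) by (simp add: l2norm_def real_sqrt_mult)
  finally show ?thesis .
qed

lemma shm_l2:
  assumes f: "f \<in> l2" and c: "\<And>n. 1 \<le> n j \<Longrightarrow> cmod (c n) \<le> M" and M: "0 \<le> M"
  shows "shm j c f \<in> l2" "l2norm (shm j c f) \<le> M * l2norm f"
proof -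
  define S where "S n = (cmod (shm j c f n))^2" for n
  define T where "T m = (cmod (c (upj m j)))^2 * (cmod (f m))^2" for m
  have fs: "(\<lambda>m. (cmod (f m))^2) summable_on UNIV" using f by (simp add: l2_def)
  have TM: "T m \<le> M^2 * (cmod (f m))^2" for m
  proof -
    have "cmod (c (upj m j)) \<le> M" using c by simp
    then have "(cmod (c (upj m j)))^2 \<le> M^2" by (rule power_mono) simp
    then show ?thesis unfolding T_def by (rule mult_right_mono) simp
  qed
  have Ts: "T summable_on UNIV"
    by (rule summable_real_le[OF summable_on_cmult_right[OF fs, of "M^2"]]) (simp add: T_def, rule TM)
  have ST: "(\<lambda>m. S (upj m j)) = T"
    by (auto simp: S_def T_def shm_def fun_eq_iff norm_mult power_mult_distrib)
  have S0: "\<And>n. n j = 0 \<Longrightarrow> S n = 0" by (simp add: S_def shm_def)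
  have "((\<lambda>m. S (upj m j)) has_sum infsum T UNIV) UNIV" unfolding ST using has_sum_infsum[OF Ts] .
  then have "(S has_sum infsum T UNIV) UNIV" using sum_reindex_up[of j S, OF S0] by blast
  then have Ss: "S summable_on UNIV" and Si: "infsum S UNIV = infsum T UNIV"
    by (auto simp: has_sum_iff)
  show "shm j c f \<in> l2" using Ss by (simp add: l2_def S_def[abs_def])
  have "infsum T UNIV \<le> infsum (\<lambda>m. M^2 * (cmod (f m))^2) UNIV"
    by (rule infsum_mono[OF Ts summable_on_cmult_right[OF fs]]) (rule TM)
  also have "\<dots> = M^2 * infsum (\<lambda>m. (cmod (f m))^2) UNIV" by (simp add: infsum_cmult_right')
  finally show "l2norm (shm j c f) \<le> M * l2norm f"
    using Si M by (intro l2norm_le_from_sq) (simp_all add: S_def[abs_def])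
qed

lemma shp_l2:
  assumes f: "f \<in> l2" and c: "\<And>n. cmod (c n) \<le> M" and M: "0 \<le> M"
  shows "shp j c f \<in> l2" "l2norm (shp j c f) \<le> M * l2norm f"
proof -
  define F where "F n = (cmod (f n))^2" for n
  have fs: "F summable_on UNIV" using f by (simp add: l2_def F_def[abs_def])
  have fr: "F summable_on range (\<lambda>m. upj m j)"
    using summable_on_subset_banach[OF fs] by simp
  have Fu: "(\<lambda>m. F (upj m j)) summable_on UNIV"
    using fr summable_on_reindex[OF inj_upj[of j], where g=F] by (simp add: o_def)
  have Fui: "infsum (\<lambda>m. F (upj m j)) UNIV \<le> infsum F UNIV"
  proof -
    have "infsum (\<lambda>m. F (upj m j)) UNIV = infsum F (range (\<lambda>m. upj m j))"
      using infsum_reindex[OF inj_upj[of j], where g=F] by (simp add: o_def)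
    also have "\<dots> \<le> infsum F UNIV"
      by (rule infsum_mono2[OF fr fs]) (auto simp: F_def)
    finally show ?thesis .
  qed
  define S where "S n = (cmod (shp j c f n))^2" for n
  have SM: "S n \<le> M^2 * F (upj n j)" for n
  proof -
    have "(cmod (c n))^2 \<le> M^2" using c[of n] by (rule power_mono) simp
    then show ?thesis unfolding S_def shp_def F_def norm_mult power_mult_distrib
      by (rule mult_right_mono) simp
  qed
  have Ss: "S summable_on UNIV"
    by (rule summable_real_le[OF summable_on_cmult_right[OF Fu, of "M^2"]]) (simp add: S_def, rule SM)
  show "shp j c f \<in> l2" using Ss by (simp add: l2_def S_def[abs_def])
  have "infsum S UNIV \<le> infsum (\<lambda>n. M^2 * F (upj n j)) UNIV"
    by (rule infsum_mono[OF Ss summable_on_cmult_right[OF Fu]]) (rule SM)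
  also have "\<dots> = M^2 * infsum (\<lambda>n. F (upj n j)) UNIV" by (simp add: infsum_cmult_right')
  also have "\<dots> \<le> M^2 * infsum F UNIV" using Fui by (simp add: mult_left_mono)
  finally show "l2norm (shp j c f) \<le> M * l2norm f"
    using M by (intro l2norm_le_from_sq) (simp_all add: S_def[abs_def] F_def[abs_def])
qed

lemma shm_adj: "l2inner f (shm j c g) = l2inner (shp j (\<lambda>m. cnj (c (upj m j))) f) g"
proof -
  have "l2inner f (shm j c g) = infsum (\<lambda>n. cnj (f n) * shm j c g n) (range (\<lambda>m. upj m j))"
    unfolding l2inner_def
    by (rule infsum_cong_neutral) (auto simp: shm_def dest: notin_range_upj)
  also have "\<dots> = infsum (\<lambda>m. cnj (f (upj m j)) * shm j c g (upj m j)) UNIV"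
    using infsum_reindex[OF inj_upj[of j], where g="\<lambda>n. cnj (f n) * shm j c g n"] by (simp add: o_def)
  also have "\<dots> = l2inner (shp j (\<lambda>m. cnj (c (upj m j))) f) g"
    unfolding l2inner_def by (rule infsum_cong) (simp add: shm_def shp_def)
  finally show ?thesis .
qed

lemma shp_adj: "l2inner f (shp j c g) = l2inner (shm j (\<lambda>n. cnj (c (dnj n j))) f) g"
proof -
  have "l2inner (shm j (\<lambda>n. cnj (c (dnj n j))) f) g
      = infsum (\<lambda>n. cnj (shm j (\<lambda>n. cnj (c (dnj n j))) f n) * g n) (range (\<lambda>m. upj m j))"
    unfolding l2inner_def
    by (rule infsum_cong_neutral) (auto simp: shm_def dest: notin_range_upj)
  also have "\<dots> = infsum (\<lambda>m. cnj (shm j (\<lambda>n. cnj (c (dnj n j))) f (upj m j)) * g (upj m j)) UNIV"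
    using infsum_reindex[OF inj_upj[of j], where g="\<lambda>n. cnj (shm j (\<lambda>n. cnj (c (dnj n j))) f n) * g n"]
    by (simp add: o_def)
  also have "\<dots> = l2inner f (shp j c g)"
    unfolding l2inner_def by (rule infsum_cong) (simp add: shm_def shp_def)
  finally show ?thesis by simp
qed

lemma shm_cong: "(\<And>n. 1 \<le> n j \<Longrightarrow> c n = c' n) \<Longrightarrow> shm j c f = shm j c' f"
  by (auto simp: shm_def fun_eq_iff)

lemma jbr_ge1: "1 \<le> jbr x" by (simp add: jbr_def)
lemma jbr_ge: "\<bar>x\<bar> \<le> jbr x" unfolding jbr_def by (simp add: real_le_rsqrt)
lemma jbr_pos: "0 < jbr x" using jbr_ge1[of x] by simp
lemma jbr_mono: "0 \<le> x \<Longrightarrow> x \<le> y \<Longrightarrow> jbr x \<le> jbr y"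
  unfolding jbr_def by (simp add: power_mono)
lemma jbr_suc: "0 \<le> x \<Longrightarrow> jbr (x + 1) \<le> jbr x + 1"
proof -
  assume x: "0 \<le> x"
  have xj: "x \<le> jbr x" using jbr_ge[of x] x by simp
  have a: "(jbr (x + 1))^2 = 1 + (x + 1)^2" by (simp add: jbr_def)
  have b: "(jbr x)^2 = 1 + x^2" by (simp add: jbr_def)
  have c: "(jbr x + 1)^2 = 1 + x^2 + 2 * jbr x + 1" using b by (simp add: power2_sum)
  have d: "1 + (x + 1)^2 = 1 + x^2 + 2 * x + 1" by (simp add: power2_sum)
  have "(jbr (x + 1))^2 \<le> (jbr x + 1)^2"
    unfolding a c d using xj by linarith
  moreover have "0 \<le> jbr x + 1" using jbr_ge1[of x] by linarith
  ultimately show ?thesis by (rule power2_le_imp_le)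
qed

lemma Lambda_ge_jbr: "jbr (real (n j)) \<le> Lambda n"
  unfolding Lambda_def
  by (rule member_le_sum) (auto intro: order.trans[OF zero_le_one jbr_ge1])

lemma Lambda_ge1: "1 \<le> Lambda n" using Lambda_ge_jbr jbr_ge1 order.trans by blast
lemma Lambda_pos: "0 < Lambda n" using Lambda_ge1[of n] by simp

lemma nj_le_Lambda: "real (n j) \<le> Lambda n"
  using jbr_ge[of "real (n j)"] Lambda_ge_jbr[of n j] by simp

lemma Lambda_split: "Lambda n = jbr (real (n j)) + (\<Sum>k\<in>UNIV - {j}. jbr (real (n k)))"
  unfolding Lambda_def by (simp add: sum.remove)

lemma Lambda_up: "Lambda (upj n j) \<le> 2 * Lambda n"
proof -
  have "Lambda (upj n j) = jbr (real (n j) + 1) + (\<Sum>k\<in>UNIV - {j}. jbr (real (n k)))"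
    using Lambda_split[of "upj n j" j] by (simp add: add.commute)
  also have "\<dots> \<le> jbr (real (n j)) + 1 + (\<Sum>k\<in>UNIV - {j}. jbr (real (n k)))"
    using jbr_suc[of "real (n j)"] by simp
  also have "\<dots> = Lambda n + 1" using Lambda_split[of n j] by simp
  also have "\<dots> \<le> 2 * Lambda n" using Lambda_ge1[of n] by simp
  finally show ?thesis .
qed

lemma Lambda_dn: "Lambda (dnj n j) \<le> Lambda n"
  unfolding Lambda_def by (rule sum_mono) (auto intro: jbr_mono)

lemma Lambda_up_ge: "Lambda n \<le> Lambda (upj n j)"
  unfolding Lambda_def by (rule sum_mono) (auto intro: jbr_mono)

lemma finite_Lambda_le: "finite {n :: 'd::finite \<Rightarrow> nat. Lambda n \<le> R}"
proof (rule finite_subset)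
  show "{n :: 'd \<Rightarrow> nat. Lambda n \<le> R} \<subseteq> PiE UNIV (\<lambda>_. {..nat \<lceil>R\<rceil>})"
  proof
    fix n :: "'d \<Rightarrow> nat" assume "n \<in> {n. Lambda n \<le> R}"
    then have "real (n j) \<le> R" for j using nj_le_Lambda[of n j] by simp
    have "n j \<le> nat \<lceil>R\<rceil>" for j
    proof -
      have "real (n j) \<le> real_of_int \<lceil>R\<rceil>" using \<open>real (n j) \<le> R\<close> le_of_int_ceiling[of R] by linarith
      then have "int (n j) \<le> \<lceil>R\<rceil>" by (metis of_int_le_iff of_int_of_nat_eq)
      then show ?thesis by (metis nat_int nat_mono)
    qed
    then show "n \<in> PiE UNIV (\<lambda>_. {..nat \<lceil>R\<rceil>})" by (simp add: PiE_UNIV_domain)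
  qed
  show "finite (PiE UNIV (\<lambda>_ :: 'd. {..nat \<lceil>R\<rceil>}))" by (rule finite_PiE) auto
qed

definition Ptr :: "real \<Rightarrow> (('d::finite \<Rightarrow> nat) \<Rightarrow> complex) \<Rightarrow> ('d \<Rightarrow> nat) \<Rightarrow> complex" where
  "Ptr R f = (\<lambda>n. if Lambda n \<le> R then f n else 0)"

lemma Ptr_fin_supp: "fin_supp (Ptr R f)"
  unfolding fin_supp_def Ptr_def
  by (rule finite_subset[OF _ finite_Lambda_le[of R]]) auto

lemma Ptr_l2: "Ptr R f \<in> l2" using fin_supp_l2[OF Ptr_fin_supp] .

lemma Ptr_tail:
  assumes f: "f \<in> l2" and e: "e > 0"
  shows "\<exists>R0. \<forall>R\<ge>R0. l2norm (\<lambda>n. f n - Ptr R f n) \<le> e"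
proof -
  define F where "F n = (cmod (f n))^2" for n
  have Fs: "F summable_on UNIV" using f by (simp add: l2_def F_def[abs_def])
  have F0: "0 \<le> F n" for n by (simp add: F_def)
  obtain A where A: "finite A" "dist (sum F A) (infsum F UNIV) \<le> e^2"
    using infsum_finite_approximation[OF Fs, of "e^2"] e by auto
  define R0 where "R0 = (\<Sum>n\<in>A. Lambda n)"
  have "\<forall>R\<ge>R0. l2norm (\<lambda>n. f n - Ptr R f n) \<le> e"
  proof (intro allI impI)
    fix R assume R: "R \<ge> R0"
    define S where "S = {n :: 'a \<Rightarrow> nat. Lambda n \<le> R}"
    have Sf: "finite S" using finite_Lambda_le by (simp add: S_def)
    have AS: "A \<subseteq> S"
    proof
      fix n assume "n \<in> A"
      then have "Lambda n \<le> R0" unfolding R0_def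
        using A(1) by (intro member_le_sum) (auto intro: less_imp_le[OF Lambda_pos])
      then show "n \<in> S" using R by (simp add: S_def)
    qed
    have eq: "infsum (\<lambda>n. (cmod (f n - Ptr R f n))^2) UNIV = infsum F (UNIV - S)"
      by (rule infsum_cong_neutral) (auto simp: Ptr_def S_def F_def)
    also have "\<dots> = infsum F UNIV - infsum F S"
      by (rule infsum_Diff[OF Fs]) (auto simp: Sf)
    also have "infsum F S = sum F S" using Sf by simp
    also have "sum F A \<le> sum F S" using Sf AS F0 by (intro sum_mono2) auto
    then have "infsum F UNIV - sum F S \<le> e^2"
      using A(2) by (simp add: dist_real_def)
    finally have "infsum (\<lambda>n. (cmod (f n - Ptr R f n))^2) UNIV \<le> e^2" .
    then show "l2norm (\<lambda>n. f n - Ptr R f n) \<le> e"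
      unfolding l2norm_def using e by (simp add: real_sqrt_le_iff real_le_lsqrt)
  qed
  then show ?thesis by blast
qed

lemma vf_sum: "finite S \<Longrightarrow> vf (\<Sum>j\<in>S. x j) = (\<lambda>n. \<Sum>j\<in>S. vf (x j) n)"
  by (induction S rule: finite_induct) (simp_all add: vf_zero vf_plus)

lemma shsum_l2:
  fixes a b :: "'d \<Rightarrow> ('d::finite \<Rightarrow> nat) \<Rightarrow> complex"
  assumes f: "f \<in> l2" and a: "\<And>j n. 1 \<le> n j \<Longrightarrow> cmod (a j n) \<le> M"
    and b: "\<And>j n. cmod (b j n) \<le> M" and M: "0 \<le> M"
  shows "(\<lambda>n. \<Sum>j\<in>UNIV. shm j (a j) f n + shp j (b j) f n) \<in> l2"
    "l2norm (\<lambda>n. \<Sum>j\<in>UNIV. shm j (a j) f n + shp j (b j) f n) \<le> 2 * real CARD('d) * M * l2norm f"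
proof -
  define X where "X = (\<Sum>j\<in>UNIV. Vec (shm j (a j) f) + Vec (shp j (b j) f))"
  have ml: "shm j (a j) f \<in> l2" "l2norm (shm j (a j) f) \<le> M * l2norm f" for j
    using shm_l2[OF f a M] by auto
  have pl: "shp j (b j) f \<in> l2" "l2norm (shp j (b j) f) \<le> M * l2norm f" for j
    using shp_l2[OF f b M] by auto
  have eq: "(\<lambda>n. \<Sum>j\<in>UNIV. shm j (a j) f n + shp j (b j) f n) = vf X"
    unfolding X_def by (simp add: vf_sum vf_plus vf_Vec ml pl)
  show "(\<lambda>n. \<Sum>j\<in>UNIV. shm j (a j) f n + shp j (b j) f n) \<in> l2"
    unfolding eq by (rule vf_l2)
  have "norm X \<le> (\<Sum>j\<in>UNIV. norm (Vec (shm j (a j) f) + Vec (shp j (b j) f)))"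
    unfolding X_def by (rule norm_sum)
  also have "\<dots> \<le> (\<Sum>j\<in>(UNIV::'d set). 2 * M * l2norm f)"
  proof (rule sum_mono)
    fix j
    have "norm (Vec (shm j (a j) f) + Vec (shp j (b j) f)) \<le> norm (Vec (shm j (a j) f)) + norm (Vec (shp j (b j) f))"
      by (rule norm_triangle_ineq)
    also have "\<dots> \<le> M * l2norm f + M * l2norm f"
    proof -
      have "norm (Vec (shm j (a j) f)) = l2norm (shm j (a j) f)" by (simp add: l2norm_Vec ml)
      moreover have "norm (Vec (shp j (b j) f)) = l2norm (shp j (b j) f)" by (simp add: l2norm_Vec pl)
      ultimately show ?thesis using ml(2)[of j] pl(2)[of j] by linarith
    qed
    finally show "norm (Vec (shm j (a j) f) + Vec (shp j (b j) f)) \<le> 2 * M * l2norm f" by simp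
  qed
  also have "\<dots> = 2 * real CARD('d) * M * l2norm f" by simp
  finally show "l2norm (\<lambda>n. \<Sum>j\<in>UNIV. shm j (a j) f n + shp j (b j) f n) \<le> 2 * real CARD('d) * M * l2norm f"
    unfolding eq by (simp add: norm_vec_l2norm)
qed

lemma l2inner_scale_left': "l2inner (\<lambda>n. c * f n) g = cnj c * l2inner f g"
proof -
  have "l2inner (\<lambda>n. c * f n) g = infsum (\<lambda>n. cnj c * (cnj (f n) * g n)) UNIV"
    unfolding l2inner_def by (simp add: mult.assoc)
  then show ?thesis by (simp add: infsum_cmult_right' l2inner_def)
qed

lemma l2inner_scale_right': "l2inner f (\<lambda>n. c * g n) = c * l2inner f g"
proof -
  have "l2inner f (\<lambda>n. c * g n) = infsum (\<lambda>n. c * (cnj (f n) * g n)) UNIV"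
    unfolding l2inner_def by (simp add: algebra_simps)
  then show ?thesis by (simp add: infsum_cmult_right' l2inner_def)
qed

definition sg :: "('d \<Rightarrow> real) \<Rightarrow> 'd \<Rightarrow> complex" where "sg r j = complex_of_real (sgn (r j))"

definition alpha :: "('d \<Rightarrow> real) \<Rightarrow> 'd \<Rightarrow> ('d \<Rightarrow> nat) \<Rightarrow> complex" where
  "alpha r j n = - (\<i> * sg r j / 2) * complex_of_real (real (n j) - 1/2)"
definition beta :: "('d \<Rightarrow> real) \<Rightarrow> 'd \<Rightarrow> ('d \<Rightarrow> nat) \<Rightarrow> complex" where
  "beta r j n = (\<i> * sg r j / 2) * complex_of_real (real (n j) + 1/2)"

lemma A_plus_eq: "A_plus r j f = (\<lambda>n. shm j (alpha r j) f n + shp j (beta r j) f n)"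
  unfolding A_plus_def shm_def shp_def alpha_def beta_def sg_def
  by (rule ext) (simp add: algebra_simps)

lemma A0_eq: "A0 r f = (\<lambda>n. \<Sum>j\<in>UNIV. shm j (alpha r j) f n + shp j (beta r j) f n)"
  unfolding A0_def A_plus_eq ..

definition gam :: "(('d \<Rightarrow> nat) \<Rightarrow> real) \<Rightarrow> ('d \<Rightarrow> real) \<Rightarrow> 'd \<Rightarrow> ('d \<Rightarrow> nat) \<Rightarrow> complex" where
  "gam W r j n = (if 1 \<le> n j then complex_of_real (sgn (r j) / 2 * (real (n j) - 1/2) * (W n - W (dnj n j))) else 0)"
definition kap :: "(('d \<Rightarrow> nat) \<Rightarrow> real) \<Rightarrow> ('d \<Rightarrow> real) \<Rightarrow> 'd \<Rightarrow> ('d \<Rightarrow> nat) \<Rightarrow> complex" where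
  "kap W r j n = complex_of_real (- (sgn (r j) / 2) * (real (n j) + 1/2) * (W n - W (upj n j)))"

definition Bop :: "(('d::finite \<Rightarrow> nat) \<Rightarrow> real) \<Rightarrow> ('d \<Rightarrow> real) \<Rightarrow> 'd seq \<Rightarrow> 'd seq" where
  "Bop W r g = (\<lambda>n. \<Sum>j\<in>UNIV. shm j (gam W r j) g n + shp j (kap W r j) g n)"

lemma Bop_comm:
  "Bop W r g n = complex_of_real (W n) * (\<i> * A0 r g n) - \<i> * A0 r (mult_op W g) n"
proof -
  have "complex_of_real (W n) * (\<i> * A0 r g n) - \<i> * A0 r (mult_op W g) n
     = (\<Sum>j\<in>UNIV. complex_of_real (W n) * (\<i> * (shm j (alpha r j) g n + shp j (beta r j) g n))
          - \<i> * (shm j (alpha r j) (mult_op W g) n + shp j (beta r j) (mult_op W g) n))"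
    unfolding A0_eq by (simp add: sum_distrib_left sum_subtractf)
  also have "\<dots> = (\<Sum>j\<in>UNIV. shm j (gam W r j) g n + shp j (kap W r j) g n)"
  proof (rule sum.cong[OF refl])
    fix j
    have ia: "\<i> * alpha r j n = complex_of_real (sgn (r j) / 2 * (real (n j) - 1/2))"
      by (simp add: alpha_def sg_def field_simps)
    have ib: "\<i> * beta r j n = complex_of_real (- (sgn (r j) / 2) * (real (n j) + 1/2))"
      by (simp add: beta_def sg_def field_simps)
    have ring: "w * (\<i> * (a * x)) - \<i> * (a * (w' * x)) = (\<i> * a) * (w - w') * x" for w w' a x :: complex
      by (simp add: algebra_simps)
    have m: "complex_of_real (W n) * (\<i> * shm j (alpha r j) g n) - \<i> * shm j (alpha r j) (mult_op W g) n
        = shm j (gam W r j) g n"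
    proof (cases "1 \<le> n j")
      case True
      then show ?thesis unfolding shm_def mult_op_def gam_def
        by (simp only: if_True ring ia) simp
    qed (simp add: shm_def)
    have p: "complex_of_real (W n) * (\<i> * shp j (beta r j) g n) - \<i> * shp j (beta r j) (mult_op W g) n
        = shp j (kap W r j) g n"
      unfolding shp_def mult_op_def kap_def by (simp only: ring ib) simp
    show "complex_of_real (W n) * (\<i> * (shm j (alpha r j) g n + shp j (beta r j) g n))
          - \<i> * (shm j (alpha r j) (mult_op W g) n + shp j (beta r j) (mult_op W g) n)
        = shm j (gam W r j) g n + shp j (kap W r j) g n"
      using m p by (simp add: algebra_simps)
  qed
  finally show ?thesis by (simp add: Bop_def)
qed

lemma fin_supp_iff: "fin_supp f \<longleftrightarrow> (\<exists>S. finite S \<and> (\<forall>n. n \<notin> S \<longrightarrow> f n = 0))"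
  unfolding fin_supp_def by (metis (mono_tags, lifting) finite_subset mem_Collect_eq subsetI)

lemma fin_supp_shm: "fin_supp f \<Longrightarrow> fin_supp (shm j c f)"
proof -
  assume "fin_supp f"
  then obtain S where S: "finite S" "\<And>n. n \<notin> S \<Longrightarrow> f n = 0" by (auto simp: fin_supp_iff)
  have "\<And>n. n \<notin> (\<lambda>m. upj m j) ` S \<Longrightarrow> shm j c f n = 0"
  proof -
    fix n assume n: "n \<notin> (\<lambda>m. upj m j) ` S"
    show "shm j c f n = 0"
    proof (cases "1 \<le> n j")
      case True
      have eq: "upj (dnj n j) j = n" using True by (rule up_dn)
      have "dnj n j \<notin> S"
      proof
        assume "dnj n j \<in> S"
        then have "upj (dnj n j) j \<in> (\<lambda>m. upj m j) ` S" by (rule imageI)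
        then have "n \<in> (\<lambda>m. upj m j) ` S" by (simp only: eq)
        then show False using n by contradiction
      qed
      then show ?thesis using S(2) by (simp add: shm_def)
    qed (simp add: shm_def)
  qed
  then show ?thesis using S(1) by (auto simp: fin_supp_iff)
qed

lemma fin_supp_shp: "fin_supp f \<Longrightarrow> fin_supp (shp j c f)"
proof -
  assume "fin_supp f"
  then obtain S where S: "finite S" "\<And>n. n \<notin> S \<Longrightarrow> f n = 0" by (auto simp: fin_supp_iff)
  have "\<And>n. n \<notin> (\<lambda>m. dnj m j) ` S \<Longrightarrow> shp j c f n = 0"
  proof -
    fix n assume n: "n \<notin> (\<lambda>m. dnj m j) ` S"
    have eq: "dnj (upj n j) j = n" by (rule dn_up)
    have "upj n j \<notin> S"
    proof
      assume "upj n j \<in> S"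
      then have "dnj (upj n j) j \<in> (\<lambda>m. dnj m j) ` S" by (rule imageI)
      then have "n \<in> (\<lambda>m. dnj m j) ` S" by (simp only: eq)
      then show False using n by contradiction
    qed
    then show "shp j c f n = 0" using S(2) by (simp add: shp_def)
  qed
  then show ?thesis using S(1) by (auto simp: fin_supp_iff)
qed

lemma fin_supp_add: "fin_supp f \<Longrightarrow> fin_supp g \<Longrightarrow> fin_supp (\<lambda>n. f n + g n)"
  unfolding fin_supp_def by (rule finite_subset[of _ "{n. f n \<noteq> 0} \<union> {n. g n \<noteq> 0}"]) auto

lemma fin_supp_sum: "(\<And>j. fin_supp (h j)) \<Longrightarrow> fin_supp (\<lambda>n. \<Sum>j\<in>(UNIV::'d::finite set). h j n)"
proof -
  assume h: "\<And>j. fin_supp (h j)"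
  have "{n. (\<Sum>j\<in>UNIV. h j n) \<noteq> 0} \<subseteq> (\<Union>j. {n. h j n \<noteq> 0})"
    by (auto intro: ccontr simp: sum.neutral)
  moreover have "finite (\<Union>j. {n. h j n \<noteq> 0})" using h by (simp add: fin_supp_def)
  ultimately show ?thesis unfolding fin_supp_def by (rule finite_subset)
qed

lemma fin_supp_mult: "fin_supp f \<Longrightarrow> fin_supp (\<lambda>n. c n * f n)"
  unfolding fin_supp_def by (rule finite_subset[of _ "{n. f n \<noteq> 0}"]) auto

lemma fin_supp_A0: "fin_supp f \<Longrightarrow> fin_supp (A0 r f)"
  unfolding A0_eq by (intro fin_supp_sum fin_supp_add fin_supp_shm fin_supp_shp)

lemma fin_supp_mult_op: "fin_supp f \<Longrightarrow> fin_supp (mult_op W f)"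
  unfolding mult_op_def by (rule fin_supp_mult)

lemma l2inner_sum_right:
  assumes "fin_supp f"
  shows "l2inner f (\<lambda>n. \<Sum>j\<in>(UNIV::'d::finite set). u j n + v j n) = (\<Sum>j\<in>UNIV. l2inner f (u j) + l2inner f (v j))"
proof -
  obtain S where S: "finite S" "\<And>n. n \<notin> S \<Longrightarrow> f n = 0" using assms by (auto simp: fin_supp_iff)
  have "l2inner f (\<lambda>n. \<Sum>j\<in>UNIV. u j n + v j n) = (\<Sum>n\<in>S. cnj (f n) * (\<Sum>j\<in>UNIV. u j n + v j n))"
    by (rule l2inner_fin_left[OF S])
  also have "\<dots> = (\<Sum>j\<in>UNIV. (\<Sum>n\<in>S. cnj (f n) * u j n) + (\<Sum>n\<in>S. cnj (f n) * v j n))"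
    by (simp add: sum_distrib_left distrib_left sum.distrib sum.swap[of _ S])
  also have "\<dots> = (\<Sum>j\<in>UNIV. l2inner f (u j) + l2inner f (v j))"
    by (simp add: l2inner_fin_left[OF S])
  finally show ?thesis .
qed

lemma l2inner_sum_left:
  assumes "fin_supp g"
  shows "l2inner (\<lambda>n. \<Sum>j\<in>(UNIV::'d::finite set). u j n + v j n) g = (\<Sum>j\<in>UNIV. l2inner (u j) g + l2inner (v j) g)"
proof -
  obtain S where S: "finite S" "\<And>n. n \<notin> S \<Longrightarrow> g n = 0" using assms by (auto simp: fin_supp_iff)
  have "l2inner (\<lambda>n. \<Sum>j\<in>UNIV. u j n + v j n) g = (\<Sum>n\<in>S. cnj (\<Sum>j\<in>UNIV. u j n + v j n) * g n)"
    by (rule l2inner_fin_right[OF S])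
  also have "\<dots> = (\<Sum>j\<in>UNIV. (\<Sum>n\<in>S. cnj (u j n) * g n) + (\<Sum>n\<in>S. cnj (v j n) * g n))"
    by (simp add: sum_distrib_right distrib_right sum.distrib sum.swap[of _ S])
  also have "\<dots> = (\<Sum>j\<in>UNIV. l2inner (u j) g + l2inner (v j) g)"
    by (simp add: l2inner_fin_right[OF S])
  finally show ?thesis .
qed

lemma A0_sym:
  assumes f: "fin_supp f" and g: "fin_supp g"
  shows "l2inner f (A0 r g) = l2inner (A0 r f) g"
proof -
  have a: "(\<lambda>m. cnj (alpha r j (upj m j))) = beta r j" for j
    by (rule ext) (simp add: alpha_def beta_def sg_def field_simps)
  have b: "shm j (\<lambda>n. cnj (beta r j (dnj n j))) f = shm j (alpha r j) f" for j
    by (rule shm_cong) (simp add: alpha_def beta_def sg_def field_simps of_nat_diff)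
  have "l2inner f (A0 r g) = (\<Sum>j\<in>UNIV. l2inner f (shm j (alpha r j) g) + l2inner f (shp j (beta r j) g))"
    unfolding A0_eq by (rule l2inner_sum_right[OF f])
  also have "\<dots> = (\<Sum>j\<in>UNIV. l2inner (shp j (beta r j) f) g + l2inner (shm j (alpha r j) f) g)"
    unfolding shm_adj shp_adj a b ..
  also have "\<dots> = l2inner (A0 r f) g"
    unfolding A0_eq by (subst l2inner_sum_left[OF g]) (simp add: add.commute)
  finally show ?thesis .
qed

lemma l2inner_diff_right_fin:
  assumes "fin_supp f"
  shows "l2inner f (\<lambda>n. a n - b n) = l2inner f a - l2inner f b"
proof -
  obtain S where S: "finite S" "\<And>n. n \<notin> S \<Longrightarrow> f n = 0" using assms by (auto simp: fin_supp_iff)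
  show ?thesis by (simp add: l2inner_fin_left[OF S] right_diff_distrib sum_subtractf)
qed

lemma form_fin:
  assumes f: "fin_supp f" and g: "fin_supp g"
  shows "l2inner f (Bop W r g) = l2inner (mult_op W f) (\<lambda>n. \<i> * A0 r g n)
           + l2inner (\<lambda>n. \<i> * A0 r f n) (mult_op W g)"
proof -
  have e1: "Bop W r g = (\<lambda>n. complex_of_real (W n) * (\<i> * A0 r g n) - \<i> * A0 r (mult_op W g) n)"
    by (rule ext) (rule Bop_comm)
  have e2: "l2inner f (\<lambda>n. complex_of_real (W n) * (\<i> * A0 r g n)) = l2inner (mult_op W f) (\<lambda>n. \<i> * A0 r g n)"
    unfolding l2inner_def mult_op_def by (rule infsum_cong) simp
  have e3: "l2inner f (\<lambda>n. \<i> * A0 r (mult_op W g) n) = - l2inner (\<lambda>n. \<i> * A0 r f n) (mult_op W g)"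
    using A0_sym[OF f fin_supp_mult_op[OF g], of r]
    by (simp add: l2inner_scale_left' l2inner_scale_right')
  show ?thesis unfolding e1 l2inner_diff_right_fin[OF f] e2 e3 by simp
qed

definition H1c :: "(('d::finite \<Rightarrow> nat) \<Rightarrow> real) \<Rightarrow> real \<Rightarrow> real \<Rightarrow> bool" where
  "H1c W C \<epsilon> \<longleftrightarrow> C > 0 \<and> \<epsilon> > 0 \<and>
     (\<forall>j n. \<bar>W (n(j := n j + 1)) - W n\<bar> \<le> C * Lambda n powr (- \<epsilon>) / jbr (real (n j)))"

lemma half_le_jbr: "0 \<le> x \<Longrightarrow> x + 1/2 \<le> 3/2 * jbr x"
  using jbr_ge[of x] jbr_ge1[of x] by simp

lemma Lpow_le1: "(\<epsilon>::real) > 0 \<Longrightarrow> Lambda n powr (- \<epsilon>) \<le> 1"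
  using powr_mono2'[of "- \<epsilon>" 1 "Lambda n"] Lambda_ge1[of n] by simp

lemma pow_anti: "(\<epsilon>::real) > 0 \<Longrightarrow> 0 < a \<Longrightarrow> a \<le> b \<Longrightarrow> b powr (- \<epsilon>) \<le> a powr (- \<epsilon>)"
  using powr_mono2'[of "- \<epsilon>" a b] by simp

lemma half_pow: "(R::real) > 0 \<Longrightarrow> (R / 2) powr (- (\<epsilon>::real)) = 2 powr \<epsilon> * R powr (- \<epsilon>)"
proof -
  assume R: "R > 0"
  have "(R / 2) powr (- \<epsilon>) = R powr (- \<epsilon>) / 2 powr (- \<epsilon>)"
    using R by (simp add: powr_divide)
  also have "2 powr (- \<epsilon>) = inverse (2 powr \<epsilon>)" by (rule powr_minus)
  also have "R powr (- \<epsilon>) / inverse (2 powr \<epsilon>) = 2 powr \<epsilon> * R powr (- \<epsilon>)"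
    by (metis divide_inverse inverse_inverse_eq mult.commute)
  finally show ?thesis .
qed

lemma sgn_abs_le: "\<bar>sgn (x::real)\<bar> \<le> 1" by (simp add: abs_sgn_eq)

lemma isg_norm: "cmod (\<i> * sg r j / 2) \<le> 1 / 2"
  using sgn_abs_le[of "r j"] by (simp add: sg_def norm_mult norm_divide)

lemma alpha_norm: "cmod (alpha r j n) \<le> 1/2 * \<bar>real (n j) - 1/2\<bar>"
proof -
  have "cmod (alpha r j n) = cmod (\<i> * sg r j / 2) * \<bar>real (n j) - 1/2\<bar>"
    by (simp only: alpha_def norm_mult norm_minus_cancel norm_of_real)
  also have "\<dots> \<le> 1/2 * \<bar>real (n j) - 1/2\<bar>" using isg_norm by (rule mult_right_mono) simp
  finally show ?thesis .
qed

lemma beta_norm: "cmod (beta r j n) \<le> 1/2 * \<bar>real (n j) + 1/2\<bar>"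
proof -
  have "cmod (beta r j n) = cmod (\<i> * sg r j / 2) * \<bar>real (n j) + 1/2\<bar>"
    by (simp only: beta_def norm_mult norm_of_real)
  also have "\<dots> \<le> 1/2 * \<bar>real (n j) + 1/2\<bar>" using isg_norm by (rule mult_right_mono) simp
  finally show ?thesis .
qed

context
  fixes W :: "('d::finite \<Rightarrow> nat) \<Rightarrow> real" and C \<epsilon> :: real and r :: "'d \<Rightarrow> real"
  assumes H: "H1c W C \<epsilon>"
begin

lemma Cpos: "C > 0" and epos: "\<epsilon> > 0"
  and Hb: "\<And>j n. \<bar>W (n(j := n j + 1)) - W n\<bar> \<le> C * Lambda n powr (- \<epsilon>) / jbr (real (n j))"
  using H by (auto simp: H1c_def)

lemma gam_bd:
  assumes "1 \<le> n j"
  shows "cmod (gam W r j n) \<le> C * Lambda (dnj n j) powr (- \<epsilon>)"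
proof -
  define m where "m = dnj n j"
  have nm: "upj m j = n" using assms by (simp add: m_def up_dn)
  have nj: "real (n j) - 1/2 = real (m j) + 1/2" using assms by (simp add: m_def of_nat_diff)
  have w: "\<bar>W n - W m\<bar> \<le> C * Lambda m powr (- \<epsilon>) / jbr (real (m j))"
    using Hb[of m j] unfolding nm .
  have "cmod (gam W r j n) = \<bar>sgn (r j) / 2 * (real (n j) - 1/2) * (W n - W m)\<bar>"
    using assms by (simp only: gam_def m_def[symmetric] if_True norm_of_real)
  also have "\<dots> = \<bar>sgn (r j)\<bar> / 2 * (real (m j) + 1/2) * \<bar>W n - W m\<bar>"
    by (simp add: nj abs_mult)
  also have "\<dots> \<le> 1 / 2 * (3/2 * jbr (real (m j))) * (C * Lambda m powr (- \<epsilon>) / jbr (real (m j)))"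
    using sgn_abs_le[of "r j"] half_le_jbr[of "real (m j)"] w
    by (intro mult_mono) auto
  also have "\<dots> = 3/4 * (C * Lambda m powr (- \<epsilon>))" using jbr_pos[of "real (m j)"] by simp
  also have "\<dots> \<le> C * Lambda m powr (- \<epsilon>)" using Cpos by simp
  finally show ?thesis by (simp add: m_def)
qed

lemma kap_bd: "cmod (kap W r j n) \<le> C * Lambda n powr (- \<epsilon>)"
proof -
  have "cmod (kap W r j n) = \<bar>- (sgn (r j) / 2) * (real (n j) + 1/2) * (W n - W (upj n j))\<bar>"
    by (simp only: kap_def norm_of_real)
  also have "\<dots> = \<bar>sgn (r j)\<bar> / 2 * (real (n j) + 1/2) * \<bar>W (upj n j) - W n\<bar>"
    by (simp add: abs_mult abs_minus_commute)
  also have "\<dots> \<le> 1 / 2 * (3/2 * jbr (real (n j))) * (C * Lambda n powr (- \<epsilon>) / jbr (real (n j)))"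
    using sgn_abs_le[of "r j"] half_le_jbr[of "real (n j)"] Hb[of n j]
    by (intro mult_mono) auto
  also have "\<dots> = 3/4 * (C * Lambda n powr (- \<epsilon>))" using jbr_pos[of "real (n j)"] by simp
  also have "\<dots> \<le> C * Lambda n powr (- \<epsilon>)" using Cpos by simp
  finally show ?thesis .
qed

lemma gam_bd1: "1 \<le> n j \<Longrightarrow> cmod (gam W r j n) \<le> C"
  using gam_bd[of n j] Lpow_le1[OF epos, of "dnj n j"] Cpos
  by (smt (verit) mult_left_le)

lemma kap_bd1: "cmod (kap W r j n) \<le> C"
  using kap_bd[of j n] Lpow_le1[OF epos, of n] Cpos
  by (smt (verit) mult_left_le)

lemma Bop_l2: "g \<in> l2 \<Longrightarrow> Bop W r g \<in> l2"
  unfolding Bop_def by (rule shsum_l2(1)) (auto intro: gam_bd1 kap_bd1 less_imp_le[OF Cpos])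

lemma Bop_bd: "g \<in> l2 \<Longrightarrow> l2norm (Bop W r g) \<le> 2 * real CARD('d) * C * l2norm g"
  unfolding Bop_def by (rule shsum_l2(2)) (auto intro: gam_bd1 kap_bd1 less_imp_le[OF Cpos])

definition Kc :: "real \<Rightarrow> real" where "Kc R = C * 2 powr \<epsilon> * R powr (- \<epsilon>)"

lemma Kc_nn: "0 \<le> Kc R" using Cpos by (simp add: Kc_def)

lemma CR_le_Kc: "C * R powr (- \<epsilon>) \<le> Kc R"
proof -
  have "1 \<le> 2 powr \<epsilon>" using epos by (intro ge_one_powr_ge_zero) auto
  then show ?thesis unfolding Kc_def using Cpos
    by (simp add: mult_le_cancel_left1 mult.assoc[symmetric] mult_right_mono)
qed

lemma half_bd: "R > 0 \<Longrightarrow> R / 2 < L \<Longrightarrow> C * L powr (- \<epsilon>) \<le> Kc R"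
proof -
  assume R: "R > 0" and L: "R / 2 < L"
  have "L powr (- \<epsilon>) \<le> (R / 2) powr (- \<epsilon>)" using R L epos by (intro pow_anti) auto
  then have "C * L powr (- \<epsilon>) \<le> C * (R / 2) powr (- \<epsilon>)" using Cpos by simp
  also have "\<dots> = Kc R" using R by (simp add: half_pow Kc_def mult.assoc)
  finally show ?thesis .
qed

lemma PB1:
  assumes g: "g \<in> l2" and R: "R \<ge> 1"
  shows "l2norm (\<lambda>n. Bop W r g n - Ptr R (Bop W r g) n) \<le> 2 * real CARD('d) * Kc R * l2norm g"
proof -
  define a where "a = (\<lambda>j n. (if Lambda n \<le> R then 0 else gam W r j n))"
  define b where "b = (\<lambda>j n. (if Lambda n \<le> R then 0 else kap W r j n))"
  have eq: "(\<lambda>n. Bop W r g n - Ptr R (Bop W r g) n) = (\<lambda>n. \<Sum>j\<in>UNIV. shm j (a j) g n + shp j (b j) g n)"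
  proof (rule ext)
    fix n
    show "Bop W r g n - Ptr R (Bop W r g) n = (\<Sum>j\<in>UNIV. shm j (a j) g n + shp j (b j) g n)"
    proof (cases "Lambda n \<le> R")
      case True
      then have "\<And>j. a j n = 0" "\<And>j. b j n = 0" by (simp_all add: a_def b_def)
      then show ?thesis using True by (simp add: Ptr_def shm_def shp_def cong: if_cong)
    next
      case False
      then have "\<And>j. a j n = gam W r j n" "\<And>j. b j n = kap W r j n" by (simp_all add: a_def b_def)
      then show ?thesis using False by (simp add: Ptr_def shm_def shp_def Bop_def cong: if_cong)
    qed
  qed
  have ab: "cmod (a j n) \<le> Kc R" if "1 \<le> n j" for j n
  proof (cases "Lambda n \<le> R")
    case False
    have "Lambda n \<le> 2 * Lambda (dnj n j)" using Lambda_up[of "dnj n j" j] that by (simp add: up_dn)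
    then have "R / 2 < Lambda (dnj n j)" using False by simp
    then have h: "C * Lambda (dnj n j) powr (- \<epsilon>) \<le> Kc R" using R by (intro half_bd) auto
    have g1: "cmod (gam W r j n) \<le> C * Lambda (dnj n j) powr (- \<epsilon>)" using that by (rule gam_bd)
    have ae: "a j n = gam W r j n" using False by (simp add: a_def)
    show ?thesis unfolding ae using g1 h by linarith
  qed (simp add: a_def Kc_nn)
  have bb: "cmod (b j n) \<le> Kc R" for j n
  proof (cases "Lambda n \<le> R")
    case False
    have "R / 2 < Lambda n" using False R by simp
    then have h: "C * Lambda n powr (- \<epsilon>) \<le> Kc R" using R by (intro half_bd) auto
    have be: "b j n = kap W r j n" using False by (simp add: b_def)
    show ?thesis unfolding be using kap_bd[of j n] h by linarith
  qed (simp add: b_def Kc_nn)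
  show ?thesis unfolding eq by (rule shsum_l2(2)[OF g ab bb Kc_nn])
qed

lemma PB2:
  assumes g: "g \<in> l2" and R: "R \<ge> 1"
  shows "l2norm (Bop W r (\<lambda>n. g n - Ptr R g n)) \<le> 2 * real CARD('d) * Kc R * l2norm g"
proof -
  define a where "a = (\<lambda>j n. (if Lambda (dnj n j) \<le> R then 0 else gam W r j n))"
  define b where "b = (\<lambda>j n. (if Lambda (upj n j) \<le> R then 0 else kap W r j n))"
  have eq: "Bop W r (\<lambda>n. g n - Ptr R g n) = (\<lambda>n. \<Sum>j\<in>UNIV. shm j (a j) g n + shp j (b j) g n)"
    unfolding Bop_def
    by (rule ext, rule sum.cong[OF refl]) (auto simp: Ptr_def shm_def shp_def a_def b_def One_nat_def algebra_simps)
  have ab: "cmod (a j n) \<le> Kc R" if "1 \<le> n j" for j n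
  proof (cases "Lambda (dnj n j) \<le> R")
    case False
    have "R / 2 < Lambda (dnj n j)" using False R by simp
    then have h: "C * Lambda (dnj n j) powr (- \<epsilon>) \<le> Kc R" using R by (intro half_bd) auto
    have g1: "cmod (gam W r j n) \<le> C * Lambda (dnj n j) powr (- \<epsilon>)" using that by (rule gam_bd)
    have ae: "a j n = gam W r j n" using False by (simp add: a_def)
    show ?thesis unfolding ae using g1 h by linarith
  qed (simp add: a_def Kc_nn)
  have bb: "cmod (b j n) \<le> Kc R" for j n
  proof (cases "Lambda (upj n j) \<le> R")
    case False
    have "R / 2 < Lambda n" using False Lambda_up[of n j] by simp
    then have h: "C * Lambda n powr (- \<epsilon>) \<le> Kc R" using R by (intro half_bd) auto
    have be: "b j n = kap W r j n" using False by (simp add: b_def)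
    show ?thesis unfolding be using kap_bd[of j n] h by linarith
  qed (simp add: b_def Kc_nn)
  show ?thesis unfolding eq by (rule shsum_l2(2)[OF g ab bb Kc_nn])
qed

end

lemma PA:
  fixes r :: "'d::finite \<Rightarrow> real"
  assumes g: "g \<in> l2" and R: "R \<ge> 1"
  shows "l2norm (A0 r (Ptr R g)) \<le> 2 * real CARD('d) * R * l2norm g"
proof -
  define a where "a = (\<lambda>j n. (if Lambda (dnj n j) \<le> R then alpha r j n else 0))"
  define b where "b = (\<lambda>j n. (if Lambda (upj n j) \<le> R then beta r j n else 0))"
  have eq: "A0 r (Ptr R g) = (\<lambda>n. \<Sum>j\<in>(UNIV::'d set). shm j (a j) g n + shp j (b j) g n)"
    unfolding A0_eq
    by (rule ext, rule sum.cong[OF refl]) (auto simp: Ptr_def shm_def shp_def a_def b_def One_nat_def)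
  have ab: "cmod (a j n) \<le> R" if "1 \<le> n j" for j n
  proof (cases "Lambda (dnj n j) \<le> R")
    case True
    have m: "real (n j) - 1/2 = real ((dnj n j) j) + 1/2" using that by (simp add: of_nat_diff)
    have "real ((dnj n j) j) \<le> R" using nj_le_Lambda[of "dnj n j" j] True by linarith
    then have X: "\<bar>real (n j) - 1/2\<bar> \<le> R + 1/2" unfolding m by simp
    have "cmod (alpha r j n) \<le> 1/2 * (R + 1/2)"
      using order.trans[OF alpha_norm[of r j n] mult_left_mono[OF X, of "1/2"]] by simp
    then show ?thesis using True R by (simp add: a_def)
  qed (use R in \<open>simp add: a_def\<close>)
  have bb: "cmod (b j n) \<le> R" for j n
  proof (cases "Lambda (upj n j) \<le> R")
    case True
    have "real (n j) + 1 \<le> R" using nj_le_Lambda[of "upj n j" j] True by simp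
    then have X: "\<bar>real (n j) + 1/2\<bar> \<le> R + 1/2" by simp
    have "cmod (beta r j n) \<le> 1/2 * (R + 1/2)"
      using order.trans[OF beta_norm[of r j n] mult_left_mono[OF X, of "1/2"]] by simp
    then show ?thesis using True R by (simp add: b_def)
  qed (use R in \<open>simp add: b_def\<close>)
  show ?thesis unfolding eq using R by (intro shsum_l2(2)[OF g ab bb]) auto
qed

lemma A0_Ptr_l2: "g \<in> l2 \<Longrightarrow> A0 r (Ptr R g) \<in> l2"
  using fin_supp_l2[OF fin_supp_A0[OF Ptr_fin_supp]] .

lemma powr_integral_finite:
  fixes c \<delta> :: real
  assumes c: "c \<ge> 0" and d: "\<delta> > 0"
    and le: "\<And>s. 0 < s \<Longrightarrow> s \<le> 1 \<Longrightarrow> X s \<le> c * s powr (\<delta> - 1)"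
  shows "(\<integral>\<^sup>+ s \<in> {0<..1}. ennreal (X s) \<partial>lborel) < \<infinity>"
proof -
  have hi: "((\<lambda>s. c * s powr (\<delta> - 1)) has_integral c * (1 powr (\<delta> - 1 + 1) / (\<delta> - 1 + 1))) {0..1}"
    using has_integral_powr_from_0[of "\<delta> - 1" 1] d by (intro has_integral_mult_right) auto
  have eq: "(\<integral>\<^sup>+ s. ennreal (c * s powr (\<delta> - 1)) * indicator {0..1} s \<partial>lborel) = ennreal (c * (1 powr (\<delta> - 1 + 1) / (\<delta> - 1 + 1)))"
    by (rule nn_integral_has_integral_lebesgue'[OF _ hi]) (use c in auto)
  have "(\<integral>\<^sup>+ s \<in> {0<..1}. ennreal (X s) \<partial>lborel) \<le> (\<integral>\<^sup>+ s. ennreal (c * s powr (\<delta> - 1)) * indicator {0..1} s \<partial>lborel)"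
  proof (rule nn_integral_mono)
    fix s :: real
    show "ennreal (X s) * indicator {0<..1} s \<le> ennreal (c * s powr (\<delta> - 1)) * indicator {0..1} s"
      by (cases "0 < s \<and> s \<le> 1") (auto simp: indicator_def intro!: ennreal_leI le)
  qed
  also have "\<dots> < \<infinity>" unfolding eq by simp
  finally show ?thesis .
qed

lemma mult_bd:
  assumes f: "f \<in> l2" and c: "\<And>n. cmod (c n) \<le> M"
  shows "l2norm (\<lambda>n. c n * f n) \<le> M * l2norm f"
proof -
  have M: "0 \<le> M" using c[of undefined] norm_ge_zero order.trans by blast
  have fs: "(\<lambda>n. (cmod (f n))^2) summable_on UNIV" using f by (simp add: l2_def)
  have gs: "(\<lambda>n. (cmod (c n * f n))^2) summable_on UNIV"
    using l2_mult_bdd[OF f c] by (simp add: l2_def)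
  have "infsum (\<lambda>n. (cmod (c n * f n))^2) UNIV \<le> infsum (\<lambda>n. M^2 * (cmod (f n))^2) UNIV"
  proof (rule infsum_mono[OF gs summable_on_cmult_right[OF fs]])
    fix n
    have "(cmod (c n))^2 \<le> M^2" using c[of n] by (rule power_mono) simp
    then show "(cmod (c n * f n))^2 \<le> M^2 * (cmod (f n))^2"
      by (simp add: norm_mult power_mult_distrib mult_right_mono)
  qed
  also have "\<dots> = M^2 * infsum (\<lambda>n. (cmod (f n))^2) UNIV" by (simp add: infsum_cmult_right')
  finally show ?thesis using M by (rule l2norm_le_from_sq)
qed

lemma op_norm_le:
  fixes T :: "('a \<Rightarrow> complex) \<Rightarrow> ('a \<Rightarrow> complex)"
  assumes "\<And>f. f \<in> l2 \<Longrightarrow> l2norm (T f) \<le> K * l2norm f" "0 \<le> K"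
  shows "op_norm T \<le> K"
  unfolding op_norm_def
proof (rule cSUP_least)
  show "{f :: 'a \<Rightarrow> complex. f \<in> l2 \<and> l2norm f \<le> 1} \<noteq> {}" using l2_0 by (auto simp: l2norm_def intro!: exI[of _ "\<lambda>_. 0"])
  fix f :: "'a \<Rightarrow> complex" assume "f \<in> {f \<in> l2. l2norm f \<le> 1}"
  then have f: "f \<in> l2" "l2norm f \<le> 1" by auto
  have "K * l2norm f \<le> K * 1" using mult_left_mono[OF f(2) assms(2)] .
  then show "l2norm (T f) \<le> K" using assms(1)[OF f(1)] by linarith
qed

lemma l2_tendsto_op:
  assumes Tl2: "\<And>a. a \<in> l2 \<Longrightarrow> T a \<in> l2"
    and Tdiff: "\<And>a b. a \<in> l2 \<Longrightarrow> b \<in> l2 \<Longrightarrow> T (\<lambda>n. a n - b n) = (\<lambda>n. T a n - T b n)"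
    and Tbd: "\<And>a. a \<in> l2 \<Longrightarrow> l2norm (T a) \<le> K * l2norm a"
    and xk: "\<And>k. xk k \<in> l2" and x: "x \<in> l2" and lim: "l2_tendsto xk x F"
  shows "l2_tendsto (\<lambda>k. T (xk k)) (T x) F"
  unfolding l2_tendsto_def
proof (rule tendsto_sandwich[where f="\<lambda>_. 0" and h="\<lambda>k. K * l2norm (\<lambda>n. xk k n - x n)"])
  show "\<forall>\<^sub>F k in F. 0 \<le> l2norm (\<lambda>n. T (xk k) n - T x n)" by (simp add: l2norm_nonneg)
  show "\<forall>\<^sub>F k in F. l2norm (\<lambda>n. T (xk k) n - T x n) \<le> K * l2norm (\<lambda>n. xk k n - x n)"
    using Tbd[OF l2_diff[OF xk x]] Tdiff[OF xk x] by simp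
  show "((\<lambda>_. 0) \<longlongrightarrow> (0::real)) F" by simp
  have "((\<lambda>k. l2norm (\<lambda>n. xk k n - x n)) \<longlongrightarrow> 0) F" using lim by (simp add: l2_tendsto_def)
  from tendsto_mult_right_zero[OF this, of K] show "((\<lambda>k. K * l2norm (\<lambda>n. xk k n - x n)) \<longlongrightarrow> 0) F"
    by (simp add: mult.commute)
qed

lemma Bop_diff: "Bop W r (\<lambda>n. a n - b n) = (\<lambda>n. Bop W r a n - Bop W r b n)"
  unfolding Bop_def
  by (rule ext, subst sum_subtractf[symmetric], rule sum.cong[OF refl]) (auto simp: shm_def shp_def algebra_simps)

lemma mult_op_diff: "mult_op W (\<lambda>n. a n - b n) = (\<lambda>n. mult_op W a n - mult_op W b n)"
  by (simp add: mult_op_def algebra_simps)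

locale thm_ctx =
  fixes W :: "('d::finite \<Rightarrow> nat) \<Rightarrow> real" and r :: "'d \<Rightarrow> real"
    and U :: "real \<Rightarrow> 'd seq \<Rightarrow> 'd seq" and M C \<epsilon> :: real
  assumes Mb: "\<And>n. \<bar>W n\<bar> \<le> M" and H: "H1c W C \<epsilon>" and UG: "unitary_group_gen U (A_graph r)"
begin

lemma M_nn: "0 \<le> M" using Mb[of undefined] by linarith

lemma Cpos: "0 < C" and epos: "0 < \<epsilon>" using H by (auto simp: H1c_def)

lemma U_bop: "bounded_op (U s)" and U_isom: "\<And>f. f \<in> l2 \<Longrightarrow> l2norm (U s f) = l2norm f"
  and U0: "\<And>f. f \<in> l2 \<Longrightarrow> U 0 f = f"
  and Ucomp: "\<And>f. f \<in> l2 \<Longrightarrow> U (s + t) f = U s (U t f)"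
  and Ucont: "\<And>f. f \<in> l2 \<Longrightarrow> l2_tendsto (\<lambda>s. U s f) (U s0 f) (at s0)"
  and Ugen: "\<And>f g. f \<in> l2 \<Longrightarrow> (g \<in> l2 \<and> l2_tendsto (\<lambda>s. \<lambda>n. (U s f n - f n) / complex_of_real s) g (at 0))
                  \<longleftrightarrow> (\<exists>h. A_graph r f h \<and> g = (\<lambda>n. \<i> * h n))"
  using UG unfolding unitary_group_gen_def by blast+

lemma U_l2: "f \<in> l2 \<Longrightarrow> U s f \<in> l2" using U_bop by (simp add: bounded_op_def)

lemma U_lin: "f \<in> l2 \<Longrightarrow> g \<in> l2 \<Longrightarrow> U s (\<lambda>n. a * f n + b * g n) = (\<lambda>n. a * U s f n + b * U s g n)"
  using U_bop by (simp add: bounded_op_def)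

definition Ul :: "real \<Rightarrow> ('d \<Rightarrow> nat) lv \<Rightarrow> ('d \<Rightarrow> nat) lv" where "Ul s x = Vec (U s (vf x))"
definition Wl :: "('d \<Rightarrow> nat) lv \<Rightarrow> ('d \<Rightarrow> nat) lv" where "Wl x = Vec (mult_op W (vf x))"
definition Bl :: "('d \<Rightarrow> nat) lv \<Rightarrow> ('d \<Rightarrow> nat) lv" where "Bl x = Vec (Bop W r (vf x))"
definition Dl :: "('d \<Rightarrow> nat) lv set" where "Dl = {x. \<exists>y. ((\<lambda>k. (Ul k x - x) /\<^sub>R k) \<longlongrightarrow> y) (at 0)}"
definition iAl :: "('d \<Rightarrow> nat) lv \<Rightarrow> ('d \<Rightarrow> nat) lv" where "iAl x = (SOME y. ((\<lambda>k. (Ul k x - x) /\<^sub>R k) \<longlongrightarrow> y) (at 0))"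

lemma vf_Ul: "vf (Ul s x) = U s (vf x)" by (simp add: Ul_def vf_Vec U_l2 vf_l2)

lemma mW_l2: "f \<in> l2 \<Longrightarrow> mult_op W f \<in> l2"
  unfolding mult_op_def by (rule l2_mult_bdd[where M=M]) (use Mb in auto)
lemma mW_bd: "f \<in> l2 \<Longrightarrow> l2norm (mult_op W f) \<le> M * l2norm f"
  unfolding mult_op_def by (rule mult_bd) (use Mb in auto)

lemma B_l2: "f \<in> l2 \<Longrightarrow> Bop W r f \<in> l2" using Bop_l2[OF H] .
lemma B_bd: "f \<in> l2 \<Longrightarrow> l2norm (Bop W r f) \<le> (2 * real CARD('d) * C) * l2norm f" using Bop_bd[OF H] .

lemma vf_Wl: "vf (Wl x) = mult_op W (vf x)" by (simp add: Wl_def vf_Vec mW_l2 vf_l2)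
lemma vf_Bl: "vf (Bl x) = Bop W r (vf x)" by (simp add: Bl_def vf_Vec B_l2 vf_l2)

lemma quot_l2': "f \<in> l2 \<Longrightarrow> (\<lambda>n. inverse (complex_of_real k) * (U k f n - f n)) \<in> l2"
  by (rule l2_scale[OF l2_diff[OF U_l2]])

lemma quot_l2: "f \<in> l2 \<Longrightarrow> (\<lambda>n. (U k f n - f n) / complex_of_real k) \<in> l2"
  using quot_l2'[of f k] by (simp add: divide_inverse mult.commute)

lemma quot_vec:
  assumes f: "f \<in> l2"
  shows "(Ul k (Vec f) - Vec f) /\<^sub>R k = Vec (\<lambda>n. (U k f n - f n) / complex_of_real k)"
  unfolding vf_inject[symmetric]
  using quot_l2'[OF f, of k] quot_l2[OF f, of k]
  by (simp add: vf_scaleR vf_minus vf_Ul vf_Vec f divide_inverse mult.commute of_real_inverse)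

lemma gen_lv:
  assumes f: "f \<in> l2" and A: "A_graph r f h"
  shows "((\<lambda>k. (Ul k (Vec f) - Vec f) /\<^sub>R k) \<longlongrightarrow> Vec (\<lambda>n. \<i> * h n)) (at 0)"
proof -
  have "(\<lambda>n. \<i> * h n) \<in> l2 \<and> l2_tendsto (\<lambda>s n. (U s f n - f n) / complex_of_real s) (\<lambda>n. \<i> * h n) (at 0)"
    using Ugen[OF f, of "\<lambda>n. \<i> * h n"] A by blast
  then show ?thesis
    using l2_tendsto_iff[of "\<lambda>s n. (U s f n - f n) / complex_of_real s" "\<lambda>n. \<i> * h n" "at 0"]
    by (simp add: quot_vec f quot_l2)
qed

lemma gen_lv_conv:
  assumes x: "x \<in> Dl"
  shows "((\<lambda>k. (Ul k x - x) /\<^sub>R k) \<longlongrightarrow> iAl x) (at 0)"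
    "\<exists>h. A_graph r (vf x) h \<and> vf (iAl x) = (\<lambda>n. \<i> * h n)"
proof -
  show lim: "((\<lambda>k. (Ul k x - x) /\<^sub>R k) \<longlongrightarrow> iAl x) (at 0)"
    using x unfolding Dl_def iAl_def by (auto intro: someI_ex)
  have "l2_tendsto (\<lambda>s n. (U s (vf x) n - vf x n) / complex_of_real s) (vf (iAl x)) (at 0)"
    using lim l2_tendsto_iff[of "\<lambda>s n. (U s (vf x) n - vf x n) / complex_of_real s" "vf (iAl x)" "at 0"]
    by (simp add: quot_vec[symmetric] vf_l2 quot_l2 vf_inverse)
  then show "\<exists>h. A_graph r (vf x) h \<and> vf (iAl x) = (\<lambda>n. \<i> * h n)"
    using Ugen[OF vf_l2[of x], of "vf (iAl x)"] vf_l2 by blast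
qed

lemma A_graph_fin: "fin_supp f \<Longrightarrow> A_graph r f (A0 r f)"
  unfolding A_graph_def
  by (auto intro!: exI[of _ "\<lambda>k. f"] fin_supp_l2 fin_supp_A0 simp: l2_tendsto_def l2norm_def)

lemma fin_D:
  assumes f: "fin_supp f"
  shows "Vec f \<in> Dl" "iAl (Vec f) = Vec (\<lambda>n. \<i> * A0 r f n)"
proof -
  have lim: "((\<lambda>k. (Ul k (Vec f) - Vec f) /\<^sub>R k) \<longlongrightarrow> Vec (\<lambda>n. \<i> * A0 r f n)) (at 0)"
    using gen_lv[OF fin_supp_l2[OF f] A_graph_fin[OF f]] .
  then show D: "Vec f \<in> Dl" unfolding Dl_def by blast
  show "iAl (Vec f) = Vec (\<lambda>n. \<i> * A0 r f n)"
    using tendsto_unique[OF _ gen_lv_conv(1)[OF D] lim] by simp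
qed

end

lemma iscale_l2: "a \<in> l2 \<Longrightarrow> (\<lambda>n. \<i> * a n) \<in> l2" by (rule l2_scale)
lemma iscale_diff: "(\<lambda>n. \<i> * (a n - b n)) = (\<lambda>n. \<i> * a n - \<i> * b n)" by (simp add: algebra_simps)
lemma iscale_bd: "a \<in> l2 \<Longrightarrow> l2norm (\<lambda>n. \<i> * a n) \<le> 1 * l2norm a" by (simp add: l2norm_scale)

context thm_ctx begin

lemma B_diff': "a \<in> l2 \<Longrightarrow> b \<in> l2 \<Longrightarrow> Bop W r (\<lambda>n. a n - b n) = (\<lambda>n. Bop W r a n - Bop W r b n)"
  by (rule Bop_diff)

lemma form_graph:
  assumes Af: "A_graph r f f'" and Ag: "A_graph r g g'"
  shows "l2inner f (Bop W r g) = l2inner (mult_op W f) (\<lambda>n. \<i> * g' n) + l2inner (\<lambda>n. \<i> * f' n) (mult_op W g)"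
proof -
  obtain fk where f: "f \<in> l2" "f' \<in> l2" "\<And>k. fin_supp (fk k)" "l2_tendsto fk f sequentially"
    "l2_tendsto (\<lambda>k. A0 r (fk k)) f' sequentially"
    using Af unfolding A_graph_def by blast
  obtain gk where g: "g \<in> l2" "g' \<in> l2" "\<And>k. fin_supp (gk k)" "l2_tendsto gk g sequentially"
    "l2_tendsto (\<lambda>k. A0 r (gk k)) g' sequentially"
    using Ag unfolding A_graph_def by blast
  have fkl: "\<And>k. fk k \<in> l2" "\<And>k. A0 r (fk k) \<in> l2"
    using f(3) by (auto intro: fin_supp_l2 fin_supp_A0)
  have gkl: "\<And>k. gk k \<in> l2" "\<And>k. A0 r (gk k) \<in> l2"
    using g(3) by (auto intro: fin_supp_l2 fin_supp_A0)
  have e: "l2inner (fk k) (Bop W r (gk k)) = l2inner (mult_op W (fk k)) (\<lambda>n. \<i> * A0 r (gk k) n)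
      + l2inner (\<lambda>n. \<i> * A0 r (fk k) n) (mult_op W (gk k))" for k
    by (rule form_fin) (use f(3) g(3) in auto)
  have tB: "l2_tendsto (\<lambda>k. Bop W r (gk k)) (Bop W r g) sequentially"
    by (rule l2_tendsto_op[OF B_l2 B_diff' B_bd gkl(1) g(1) g(4)])
  have tWf: "l2_tendsto (\<lambda>k. mult_op W (fk k)) (mult_op W f) sequentially"
    by (rule l2_tendsto_op[OF mW_l2 mult_op_diff mW_bd fkl(1) f(1) f(4)])
  have tWg: "l2_tendsto (\<lambda>k. mult_op W (gk k)) (mult_op W g) sequentially"
    by (rule l2_tendsto_op[OF mW_l2 mult_op_diff mW_bd gkl(1) g(1) g(4)])
  have tAf: "l2_tendsto (\<lambda>k. (\<lambda>n. \<i> * A0 r (fk k) n)) (\<lambda>n. \<i> * f' n) sequentially"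
    by (rule l2_tendsto_op[where T="\<lambda>a n. \<i> * a n", OF iscale_l2 iscale_diff iscale_bd fkl(2) f(2) f(5)])
  have tAg: "l2_tendsto (\<lambda>k. (\<lambda>n. \<i> * A0 r (gk k) n)) (\<lambda>n. \<i> * g' n) sequentially"
    by (rule l2_tendsto_op[where T="\<lambda>a n. \<i> * a n", OF iscale_l2 iscale_diff iscale_bd gkl(2) g(2) g(5)])
  have L: "(\<lambda>k. l2inner (fk k) (Bop W r (gk k))) \<longlonglongrightarrow> l2inner f (Bop W r g)"
    by (rule l2inner_tendsto[OF fkl(1) B_l2[OF gkl(1)] f(1) B_l2[OF g(1)] f(4) tB])
  have R1: "(\<lambda>k. l2inner (mult_op W (fk k)) (\<lambda>n. \<i> * A0 r (gk k) n)) \<longlonglongrightarrow> l2inner (mult_op W f) (\<lambda>n. \<i> * g' n)"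
    by (rule l2inner_tendsto[OF mW_l2[OF fkl(1)] iscale_l2[OF gkl(2)] mW_l2[OF f(1)] iscale_l2[OF g(2)] tWf tAg])
  have R2: "(\<lambda>k. l2inner (\<lambda>n. \<i> * A0 r (fk k) n) (mult_op W (gk k))) \<longlonglongrightarrow> l2inner (\<lambda>n. \<i> * f' n) (mult_op W g)"
    by (rule l2inner_tendsto[OF iscale_l2[OF fkl(2)] mW_l2[OF gkl(1)] iscale_l2[OF f(2)] mW_l2[OF g(1)] tAf tWg])
  have "(\<lambda>k. l2inner (fk k) (Bop W r (gk k))) \<longlonglongrightarrow> l2inner (mult_op W f) (\<lambda>n. \<i> * g' n) + l2inner (\<lambda>n. \<i> * f' n) (mult_op W g)"
    unfolding e by (rule tendsto_add[OF R1 R2])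
  then show ?thesis using LIMSEQ_unique[OF L] by blast
qed

lemma bop_W: "bounded_op (mult_op W)"
  unfolding bounded_op_def
  using mW_l2 mW_bd by (auto simp: mult_op_def algebra_simps)

lemma Bop_lin: "Bop W r (\<lambda>n. a * f n + b * g n) = (\<lambda>n. a * Bop W r f n + b * Bop W r g n)"
  unfolding Bop_def
  by (rule ext, simp only: sum_distrib_left sum.distrib[symmetric], rule sum.cong[OF refl])
     (auto simp: shm_def shp_def algebra_simps)

lemma bop_B: "bounded_op (Bop W r)"
  unfolding bounded_op_def
  using B_l2 B_bd Bop_lin by blast

end

context thm_ctx begin

lemma Ul_add: "Ul s (x + y) = Ul s x + Ul s y"
proof -
  have "U s (\<lambda>n. vf x n + vf y n) = (\<lambda>n. U s (vf x) n + U s (vf y) n)"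
    using U_lin[OF vf_l2[of x] vf_l2[of y], where s=s and a=1 and b=1] by simp
  then show ?thesis unfolding vf_inject[symmetric] by (simp add: vf_Ul vf_plus)
qed

lemma Ul_scale: "Ul s (c *\<^sub>R x) = c *\<^sub>R Ul s x"
proof -
  have "U s (\<lambda>n. complex_of_real c * vf x n) = (\<lambda>n. complex_of_real c * U s (vf x) n)"
    using U_lin[OF vf_l2[of x] vf_l2[of x], where s=s and a="complex_of_real c" and b=0] by simp
  then show ?thesis unfolding vf_inject[symmetric] by (simp add: vf_Ul vf_scaleR)
qed

lemma Wl_lin: "linear Wl"
  by (rule linearI) (simp_all add: vf_inject[symmetric] vf_Wl vf_plus vf_scaleR mult_op_def algebra_simps)

lemma Bl_add: "Bl (x + y) = Bl x + Bl y"
  unfolding vf_inject[symmetric] vf_Bl vf_plus using Bop_lin[of 1 "vf x" 1 "vf y"] by simp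

lemma Bl_scale: "Bl (c *\<^sub>R x) = c *\<^sub>R Bl x"
  unfolding vf_inject[symmetric] vf_Bl vf_scaleR using Bop_lin[of "complex_of_real c" "vf x" 0 "vf x"] by simp

lemma Bl_lin: "linear Bl"
  by (rule linearI) (simp_all add: Bl_add Bl_scale)

lemma Ptr_idem: "Ptr R (Ptr R f) = Ptr R f" by (simp add: Ptr_def fun_eq_iff)

sublocale AS: abs_setting Ul Dl iAl Wl Bl M "2 * real CARD('d) * C"
proof unfold_locales
  fix s b1 b2 show "Ul s (b1 + b2) = Ul s b1 + Ul s b2" by (rule Ul_add)
next
  fix s c b show "Ul s (c *\<^sub>R b) = c *\<^sub>R Ul s b" by (rule Ul_scale)
next
  fix s x show "norm (Ul s x) = norm x"
    by (simp add: norm_vec_l2norm vf_Ul U_isom vf_l2)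
next
  fix s t x show "Ul s (Ul t x) = Ul (s + t) x"
    unfolding vf_inject[symmetric] by (simp add: vf_Ul Ucomp vf_l2 U_l2)
next
  fix x show "Ul 0 x = x"
    unfolding vf_inject[symmetric] by (simp add: vf_Ul U0 vf_l2)
next
  fix x s0 show "((\<lambda>s. Ul s x) \<longlongrightarrow> Ul s0 x) (at s0)"
    using Ucont[OF vf_l2[of x], of s0] l2_tendsto_iff[of "\<lambda>s. U s (vf x)" "U s0 (vf x)" "at s0"]
    by (simp add: U_l2 vf_l2 Ul_def)
next
  fix x assume "x \<in> Dl" then show "((\<lambda>k. (Ul k x - x) /\<^sub>R k) \<longlongrightarrow> iAl x) (at 0)"
    by (rule gen_lv_conv(1))
next
  fix x y assume "((\<lambda>k. (Ul k x - x) /\<^sub>R k) \<longlongrightarrow> y) (at 0)" then show "x \<in> Dl"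
    unfolding Dl_def by blast
next
  fix x :: "('d \<Rightarrow> nat) lv" and e :: real assume e: "e > 0"
  obtain R0 where R0: "\<And>R. R \<ge> R0 \<Longrightarrow> l2norm (\<lambda>n. vf x n - Ptr R (vf x) n) \<le> e / 2"
    using Ptr_tail[OF vf_l2[of x], of "e / 2"] e by auto
  have "Vec (Ptr R0 (vf x)) \<in> Dl" by (rule fin_D(1)[OF Ptr_fin_supp])
  moreover have "norm (x - Vec (Ptr R0 (vf x))) < e"
  proof -
    have "norm (x - Vec (Ptr R0 (vf x))) = l2norm (\<lambda>n. vf x n - Ptr R0 (vf x) n)"
      by (simp add: norm_vec_l2norm vf_minus vf_Vec Ptr_l2)
    then show ?thesis using R0[of R0] e by simp
  qed
  ultimately show "\<exists>d\<in>Dl. norm (x - d) < e" by blast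
next
  fix b1 b2 show "Wl (b1 + b2) = Wl b1 + Wl b2"
    by (simp add: vf_inject[symmetric] vf_Wl vf_plus mult_op_def algebra_simps)
next
  fix c b show "Wl (c *\<^sub>R b) = c *\<^sub>R Wl b"
    by (simp add: vf_inject[symmetric] vf_Wl vf_scaleR mult_op_def algebra_simps)
next
  fix x show "norm (Wl x) \<le> M * norm x"
    by (simp add: norm_vec_l2norm vf_Wl mW_bd vf_l2)
next
  fix x y show "inner (Wl x) y = inner x (Wl y)"
    unfolding inner_vec_l2inner vf_Wl l2inner_def mult_op_def by (simp add: algebra_simps)
next
  fix b1 b2 show "Bl (b1 + b2) = Bl b1 + Bl b2" by (rule Bl_add)
next
  fix c b show "Bl (c *\<^sub>R b) = c *\<^sub>R Bl b" by (rule Bl_scale)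
next
  fix x show "norm (Bl x) \<le> (2 * real CARD('d) * C) * norm x"
    by (simp add: norm_vec_l2norm vf_Bl B_bd vf_l2)
next
  fix x y assume x: "x \<in> Dl" and y: "y \<in> Dl"
  obtain hx where hx: "A_graph r (vf x) hx" "vf (iAl x) = (\<lambda>n. \<i> * hx n)" using gen_lv_conv(2)[OF x] by blast
  obtain hy where hy: "A_graph r (vf y) hy" "vf (iAl y) = (\<lambda>n. \<i> * hy n)" using gen_lv_conv(2)[OF y] by blast
  have "l2inner (vf y) (Bop W r (vf x)) = l2inner (mult_op W (vf y)) (\<lambda>n. \<i> * hx n) + l2inner (\<lambda>n. \<i> * hy n) (mult_op W (vf x))"
    by (rule form_graph[OF hy(1) hx(1)])
  then show "inner y (Bl x) = inner (Wl y) (iAl x) + inner (iAl y) (Wl x)"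
    unfolding inner_vec_l2inner vf_Bl vf_Wl hx(2) hy(2) by simp
next
  show "0 \<le> M" by (rule M_nn)
next
  show "0 \<le> 2 * real CARD('d) * C" using Cpos by simp
qed

end

context thm_ctx begin

lemma vf_P: "vf (Vec (Ptr R f)) = Ptr R f" by (simp add: vf_Vec Ptr_l2)

lemma holderB: "\<exists>c\<ge>0. \<forall>t w. norm (Ul t (Bl (Ul (- t) w)) - Bl w) \<le> c * \<bar>t\<bar> powr (\<epsilon> / (1 + \<epsilon>)) * norm w"
proof (rule AS.holder[OF epos, where ca = "2 * real CARD('d) * C * 2 powr \<epsilon>" and cb = "2 * real CARD('d)"])
  show "0 \<le> 2 * real CARD('d) * C * 2 powr \<epsilon>" using Cpos by simp
  show "0 \<le> 2 * real CARD('d)" by simp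
  fix R :: real assume R: "R \<ge> 1"
  define P :: "('d \<Rightarrow> nat) lv \<Rightarrow> ('d \<Rightarrow> nat) lv" where "P = (\<lambda>z. Vec (Ptr R (vf z)))"
  have vP: "vf (P z) = Ptr R (vf z)" for z by (simp add: P_def vf_P)
  have A: "P z \<in> Dl" for z unfolding P_def by (rule fin_D(1)[OF Ptr_fin_supp])
  have B: "norm (iAl (P z)) \<le> 2 * real CARD('d) * R * norm z" for z
  proof -
    have "iAl (P z) = Vec (\<lambda>n. \<i> * A0 r (Ptr R (vf z)) n)" unfolding P_def by (rule fin_D(2)[OF Ptr_fin_supp])
    then have "norm (iAl (P z)) = l2norm (A0 r (Ptr R (vf z)))"
      by (simp add: l2norm_Vec[symmetric] l2_scale A0_Ptr_l2 vf_l2 l2norm_scale)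
    also have "\<dots> \<le> 2 * real CARD('d) * R * norm z"
      using PA[OF vf_l2 R, of r z] by (simp add: norm_vec_l2norm)
    finally show ?thesis .
  qed
  have Cc: "P (P z) = P z" for z unfolding P_def by (simp add: vf_P Ptr_idem)
  have D: "inner (P a) b = inner a (P b)" for a b
    unfolding inner_vec_l2inner vP l2inner_def
    by (rule arg_cong[where f=Re], rule infsum_cong) (simp add: Ptr_def)
  have E: "P (a - b) = P a - P b" for a b
    unfolding vf_inject[symmetric] by (simp add: vP vf_minus Ptr_def fun_eq_iff)
  have F: "norm (Bl z - P (Bl z)) \<le> 2 * real CARD('d) * C * 2 powr \<epsilon> * R powr (- \<epsilon>) * norm z" for z
  proof -
    have "vf (Bl z - P (Bl z)) = (\<lambda>n. Bop W r (vf z) n - Ptr R (Bop W r (vf z)) n)"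
      by (simp add: vf_minus vP vf_Bl)
    then have "norm (Bl z - P (Bl z)) = l2norm (\<lambda>n. Bop W r (vf z) n - Ptr R (Bop W r (vf z)) n)"
      by (simp add: norm_vec_l2norm)
    also have "\<dots> \<le> 2 * real CARD('d) * Kc C \<epsilon> R * l2norm (vf z)" by (rule PB1[OF H vf_l2 R])
    finally show ?thesis by (simp add: Kc_def[OF H] norm_vec_l2norm mult.assoc)
  qed
  have G: "norm (Bl (z - P z)) \<le> 2 * real CARD('d) * C * 2 powr \<epsilon> * R powr (- \<epsilon>) * norm z" for z
  proof -
    have "vf (Bl (z - P z)) = Bop W r (\<lambda>n. vf z n - Ptr R (vf z) n)"
      by (simp add: vf_minus vP vf_Bl)
    then have "norm (Bl (z - P z)) = l2norm (Bop W r (\<lambda>n. vf z n - Ptr R (vf z) n))"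
      by (simp add: norm_vec_l2norm)
    also have "\<dots> \<le> 2 * real CARD('d) * Kc C \<epsilon> R * l2norm (vf z)" by (rule PB2[OF H vf_l2 R])
    finally show ?thesis by (simp add: Kc_def[OF H] norm_vec_l2norm mult.assoc)
  qed
  show "\<exists>P. (\<forall>z. P z \<in> Dl \<and> norm (iAl (P z)) \<le> 2 * real CARD('d) * R * norm z)
        \<and> (\<forall>z. P (P z) = P z) \<and> (\<forall>a b. inner (P a) b = inner a (P b))
        \<and> (\<forall>a b. P (a - b) = P a - P b)
        \<and> (\<forall>z. norm (Bl z - P (Bl z)) \<le> 2 * real CARD('d) * C * 2 powr \<epsilon> * R powr (- \<epsilon>) * norm z)
        \<and> (\<forall>z. norm (Bl (z - P z)) \<le> 2 * real CARD('d) * C * 2 powr \<epsilon> * R powr (- \<epsilon>) * norm z)"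
    using A B Cc D E F G by blast
qed

end

context thm_ctx begin

lemma vf_G: "(f :: 'd seq) \<in> l2 \<Longrightarrow> vf (AS.G (Vec f) s) = U s (mult_op W (U (- s) f))"
  by (simp add: AS.G_def vf_Ul vf_Wl vf_Vec)

lemma C1: "C1_class U (mult_op W)"
  unfolding C1_class_def
proof (intro conjI ballI)
  show "bounded_op (mult_op W)" by (rule bop_W)
  fix f :: "'d seq" assume f: "f \<in> l2"
  define x where "x = Vec f"
  have Fe: "(\<lambda>s. U s (mult_op W (U (- s) f))) = (\<lambda>s. vf (AS.G x s))"
    by (simp add: x_def vf_G f)
  show "strongly_C1 (\<lambda>s. U s (mult_op W (U (- s) f)))"
    unfolding strongly_C1_def Fe
  proof (intro exI[of _ "\<lambda>s. vf (AS.K x s)"] conjI allI)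
    fix s
    show "vf (AS.K x s) \<in> l2" by (rule vf_l2)
    have eq: "(\<lambda>n. (vf (AS.G x (s + h)) n - vf (AS.G x s) n) / complex_of_real h)
        = vf ((AS.G x (s + h) - AS.G x s) /\<^sub>R h)" for h
      by (simp add: vf_scaleR vf_minus divide_inverse mult.commute of_real_inverse)
    show "l2_tendsto (\<lambda>h n. (vf (AS.G x (s + h)) n - vf (AS.G x s) n) / complex_of_real h) (vf (AS.K x s)) (at 0)"
      unfolding eq l2_tendsto_iff[OF vf_l2 vf_l2] vf_inverse by (rule AS.G_strong)
    show "l2_tendsto (\<lambda>s. vf (AS.K x s)) (vf (AS.K x s)) (at s)"
      unfolding l2_tendsto_iff[OF vf_l2 vf_l2] vf_inverse by (rule AS.K_cont)
  qed
qed

definition dl :: real where "dl = \<epsilon> / (1 + \<epsilon>)"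

lemma dl_pos: "0 < dl" using epos by (simp add: dl_def)

lemma C01_C11: "C01_class U (Bop W r) \<and> C11_class U (mult_op W)"
proof -
  obtain c where c: "c \<ge> 0" and hold: "\<And>t w. norm (Ul t (Bl (Ul (- t) w)) - Bl w) \<le> c * \<bar>t\<bar> powr dl * norm w"
    using holderB unfolding dl_def by blast
  have C01: "C01_class U (Bop W r)"
    unfolding C01_class_def
  proof (intro conjI)
    show "bounded_op (Bop W r)" by (rule bop_B)
    show "(\<integral>\<^sup>+ s \<in> {0<..1}. ennreal (op_norm (\<lambda>f n. U s (Bop W r (U (- s) f)) n - Bop W r f n) / s) \<partial>lborel) < \<infinity>"
    proof (rule powr_integral_finite[OF c dl_pos])
      fix s :: real assume s: "0 < s" "s \<le> 1"
      have "op_norm (\<lambda>f n. U s (Bop W r (U (- s) f)) n - Bop W r f n) \<le> c * s powr dl"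
      proof (rule op_norm_le)
        fix f :: "'d seq" assume f: "f \<in> l2"
        have "vf (Ul s (Bl (Ul (- s) (Vec f))) - Bl (Vec f)) = (\<lambda>n. U s (Bop W r (U (- s) f)) n - Bop W r f n)"
          by (simp add: vf_minus vf_Ul vf_Bl vf_Vec f)
        then have "l2norm (\<lambda>n. U s (Bop W r (U (- s) f)) n - Bop W r f n) = norm (Ul s (Bl (Ul (- s) (Vec f))) - Bl (Vec f))"
          by (simp add: norm_vec_l2norm)
        also have "\<dots> \<le> c * \<bar>s\<bar> powr dl * norm (Vec f)" by (rule hold)
        finally show "l2norm (\<lambda>n. U s (Bop W r (U (- s) f)) n - Bop W r f n) \<le> c * s powr dl * l2norm f"
          using s f by (simp add: l2norm_Vec)
      qed (use c in simp)
      then have "op_norm (\<lambda>f n. U s (Bop W r (U (- s) f)) n - Bop W r f n) / s \<le> c * s powr dl / s"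
        using s by (simp add: divide_right_mono)
      also have "\<dots> = c * s powr (dl - 1)" using s by (simp add: powr_diff)
      finally show "op_norm (\<lambda>f n. U s (Bop W r (U (- s) f)) n - Bop W r f n) / s \<le> c * s powr (dl - 1)" .
    qed
  qed
  have C11: "C11_class U (mult_op W)"
    unfolding C11_class_def
  proof (intro conjI)
    show "bounded_op (mult_op W)" by (rule bop_W)
    have c2: "0 \<le> c * 2 powr dl" using c by simp
    show "(\<integral>\<^sup>+ s \<in> {0<..1}. ennreal (op_norm (\<lambda>f n. U s (mult_op W (U (- s) f)) n + U (- s) (mult_op W (U s f)) n - 2 * mult_op W f n) / s^2) \<partial>lborel) < \<infinity>"
    proof (rule powr_integral_finite[OF c2 dl_pos])
      fix s :: real assume s: "0 < s" "s \<le> 1"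
      have "op_norm (\<lambda>f n. U s (mult_op W (U (- s) f)) n + U (- s) (mult_op W (U s f)) n - 2 * mult_op W f n)
          \<le> s * (c * (2 * s) powr dl)"
      proof (rule op_norm_le)
        fix f :: "'d seq" assume f: "f \<in> l2"
        have "vf (AS.G (Vec f) s + AS.G (Vec f) (- s) - 2 *\<^sub>R Wl (Vec f))
            = (\<lambda>n. U s (mult_op W (U (- s) f)) n + U (- s) (mult_op W (U s f)) n - 2 * mult_op W f n)"
          using vf_G[OF f, of s] vf_G[OF f, of "- s"] by (simp add: vf_minus vf_plus vf_scaleR vf_Wl vf_Vec f)
        then have "l2norm (\<lambda>n. U s (mult_op W (U (- s) f)) n + U (- s) (mult_op W (U s f)) n - 2 * mult_op W f n)
            = norm (AS.G (Vec f) s + AS.G (Vec f) (- s) - 2 *\<^sub>R Wl (Vec f))"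
          by (simp add: norm_vec_l2norm)
        also have "\<dots> \<le> s * (c * (2 * s) powr dl) * norm (Vec f)"
          by (rule AS.second_diff[OF c dl_pos hold]) (use s in simp)
        finally show "l2norm (\<lambda>n. U s (mult_op W (U (- s) f)) n + U (- s) (mult_op W (U s f)) n - 2 * mult_op W f n)
            \<le> s * (c * (2 * s) powr dl) * l2norm f"
          using f by (simp add: l2norm_Vec)
      qed (use c s in simp)
      then have "op_norm (\<lambda>f n. U s (mult_op W (U (- s) f)) n + U (- s) (mult_op W (U s f)) n - 2 * mult_op W f n) / s^2
          \<le> s * (c * (2 * s) powr dl) / s^2"
        using s by (simp add: divide_right_mono)
      also have "\<dots> = c * 2 powr dl * s powr (dl - 1)"
        using s by (simp add: powr_diff powr_mult power2_eq_square)
      finally show "op_norm (\<lambda>f n. U s (mult_op W (U (- s) f)) n + U (- s) (mult_op W (U s f)) n - 2 * mult_op W f n) / s^2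
          \<le> c * 2 powr dl * s powr (dl - 1)" .
    qed
  qed
  show ?thesis using C01 C11 by blast
qed

end

theorem lemma5p6:
  fixes W :: "('d::finite \<Rightarrow> nat) \<Rightarrow> real"
    and r :: "'d \<Rightarrow> real"
    and U :: "real \<Rightarrow> 'd seq \<Rightarrow> 'd seq"
  assumes r_nz: "\<forall>j. r j \<noteq> 0"
    and W_bdd: "\<exists>M. \<forall>n. \<bar>W n\<bar> \<le> M"
    and H0: "\<forall>e>0. \<exists>R. \<forall>n. eucl_abs n > R \<longrightarrow> \<bar>W n\<bar> < e"
    and H1: "\<exists>C>0. \<exists>\<epsilon>>0. \<forall>j n. \<bar>W (n(j := n j + 1)) - W n\<bar>
                 \<le> C * Lambda n powr (- \<epsilon>) / jbr (real (n j))"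
    and U: "unitary_group_gen U (A_graph r)"
  shows "C1_class U (mult_op W)
    \<and> (\<exists>B. bounded_op B
          \<and> (\<forall>f f' g g'. A_graph r f f' \<longrightarrow> A_graph r g g' \<longrightarrow>
               l2inner f (B g) = l2inner (mult_op W f) (\<lambda>n. \<i> * g' n)
                                 + l2inner (\<lambda>n. \<i> * f' n) (mult_op W g))
          \<and> C01_class U B)
    \<and> C11_class U (mult_op W)"
proof -
  obtain M where M: "\<And>n. \<bar>W n\<bar> \<le> M" using W_bdd by blast
  obtain C \<epsilon> where H: "H1c W C \<epsilon>" using H1 unfolding H1c_def by blast
  interpret T: thm_ctx W r U M C \<epsilon>
    by unfold_locales (use M H U in auto)
  show ?thesis
    using T.C1 T.bop_B T.form_graph T.C01_C11 by blast
qed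

end
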